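(* (a) The density $f_{W_Y}$ of $W_Y$ is continuously differentiable on $\mathbb R$, and $f_{W_Y}$, $f_{W_Y}'$, $f_{W_Y}''$ are bounded; hence $f_{W_Y}$ and $f_{W_Y}'$ are uniformly continuous. (c) Let $n\ge0$, let $a_1,\dots,a_n\ge0$, and for $w\in\mathbb R$ let $c_n(w)=\{|w+\Sigma_1|\ge a_1,\dots,|w+\Sigma_n|\ge a_n\}$ ($c_0(w)$ the whole space), where $\Sigma_k=W_{Y_1}+\dots+W_{Y_k}$. Define $f^{(n)}_w(x)=\frac{d}{dx}P\big(\{w+\Sigma_{n+1}\le x\}\cap c_n(w)\big)$. Then for all $w\ge0$ and $x\ge0$, $f^{(n)}_w(x)\ge f^{(n)}_w(-x)$; moreover, for fixed $x$, $w\mapsto f^{(n)}_w(x)$ is differentiable with derivative continuous and bounded in $w$.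
   Context: $(W_t)$ is a standard Wiener process. $Y$ is a random variable with $Y\ge\epsilon$ a.s. for some $\epsilon>0$ and $\mathbb E[Y]<\infty$; $W_Y$ is a centered normal variable with independent random variance $Y$ (Wiener process at an independent time $Y$). $Y_1,Y_2,\dots$ are i.i.d. copies of $Y$, and $W_{Y_1},W_{Y_2},\dots$ are independent random variables, each distributed as $W_Y$ (the Wiener increments over consecutive independent time lengths $Y_1,Y_2,\dots$). *)

theory Defs
  imports "HOL-Probability.Probability"
begin

(* Wiener increment over an independent random time length Y k:
   W_{Y_k} = sqrt(Y_k) * Z_k with Z_k standard normal independent of Y_k. *)
definition WY :: "(nat \<Rightarrow> 'a \<Rightarrow> real) \<Rightarrow> (nat \<Rightarrow> 'a \<Rightarrow> real) \<Rightarrow> nat \<Rightarrow> 'a \<Rightarrow> real" where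
  "WY Y Z k \<omega> = sqrt (Y k \<omega>) * Z k \<omega>"

definition Sigma_sum :: "(nat \<Rightarrow> 'a \<Rightarrow> real) \<Rightarrow> nat \<Rightarrow> 'a \<Rightarrow> real" where
  "Sigma_sum W k \<omega> = (\<Sum>i\<in>{1..k}. W i \<omega>)"

definition Fcdf :: "'a measure \<Rightarrow> (nat \<Rightarrow> 'a \<Rightarrow> real) \<Rightarrow> nat \<Rightarrow> (nat \<Rightarrow> real) \<Rightarrow> real \<Rightarrow> real \<Rightarrow> real" where
  "Fcdf M W n a w x = measure M {\<omega> \<in> space M. w + Sigma_sum W (Suc n) \<omega> \<le> x \<and>
        (\<forall>k\<in>{1..n}. \<bar>w + Sigma_sum W k \<omega>\<bar> \<ge> a k)}"

end

theory Submission
  imports Defs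
begin


lemma tendsto_integral_at:
  fixes s :: "real \<Rightarrow> 'b \<Rightarrow> real" and N :: "'b measure"
  assumes f: "f \<in> borel_measurable N" and s: "\<And>t. s t \<in> borel_measurable N" and e: "integrable N e"
    and lim: "AE u in N. ((\<lambda>t. s t u) \<longlongrightarrow> f u) (at x)"
    and bound: "\<forall>\<^sub>F t in at x. AE u in N. norm (s t u) \<le> e u"
  shows "((\<lambda>t. \<integral>u. s t u \<partial>N) \<longlongrightarrow> (\<integral>u. f u \<partial>N)) (at x)"
proof (subst tendsto_at_iff_sequentially, intro allI impI)
  fix X :: "nat \<Rightarrow> real" assume X1: "\<forall>i. X i \<in> UNIV - {x}" and X2: "X \<longlonglongrightarrow> x"
  have Xf: "filterlim X (at x) sequentially"
    using X1 X2 by (intro filterlim_atI) auto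
  from filterlim_iff[THEN iffD1, OF Xf, rule_format, OF bound]
  obtain N0 where w: "\<And>n. N0 \<le> n \<Longrightarrow> AE u in N. norm (s (X n) u) \<le> e u"
    by (auto simp: eventually_sequentially)
  show "((\<lambda>t. \<integral>u. s t u \<partial>N) \<circ> X) \<longlonglongrightarrow> (\<integral>u. f u \<partial>N)"
    unfolding comp_def
  proof (rule LIMSEQ_offset, rule integral_dominated_convergence)
    show "AE u in N. norm (s (X (n + N0)) u) \<le> e u" for n
      by (rule w) auto
    show "AE u in N. (\<lambda>n. s (X (n + N0)) u) \<longlonglongrightarrow> f u"
      using lim
    proof eventually_elim
      fix u assume "((\<lambda>t. s t u) \<longlongrightarrow> f u) (at x)"
      then show "(\<lambda>n. s (X (n + N0)) u) \<longlonglongrightarrow> f u"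
        by (intro LIMSEQ_ignore_initial_segment filterlim_compose[OF _ Xf])
    qed
  qed (use f s e in auto)
qed


lemma mvt_bound:
  fixes g g' :: "real \<Rightarrow> real"
  assumes "\<And>t. min a b \<le> t \<Longrightarrow> t \<le> max a b \<Longrightarrow> (g has_real_derivative g' t) (at t)"
    and "\<And>t. min a b \<le> t \<Longrightarrow> t \<le> max a b \<Longrightarrow> \<bar>g' t\<bar> \<le> B"
  shows "\<bar>g b - g a\<bar> \<le> B * \<bar>b - a\<bar>"
proof (cases a b rule: linorder_cases)
  case less
  then obtain z where z: "a < z" "z < b" "g b - g a = (b - a) * g' z"
    using MVT2[of a b g g'] assms by auto
  have "\<bar>g' z\<bar> \<le> B" using assms(2)[of z] z less by auto
  then show ?thesis using z less by (simp add: abs_mult mult_right_mono mult.commute)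
next
  case equal then show ?thesis by simp
next
  case greater
  then obtain z where z: "b < z" "z < a" "g a - g b = (a - b) * g' z"
    using MVT2[of b a g g'] assms by auto
  have "\<bar>g' z\<bar> \<le> B" using assms(2)[of z] z greater by auto
  then show ?thesis using z greater by (simp add: abs_mult mult_right_mono mult.commute abs_minus_commute)
qed

lemma deriv_integral:
  fixes k k' :: "'b \<Rightarrow> real \<Rightarrow> real" and N :: "'b measure"
  assumes r: "r > 0"
    and int: "\<And>t. \<bar>t - w\<bar> < r \<Longrightarrow> integrable N (\<lambda>u. k u t)"
    and der: "\<And>u t. u \<in> space N \<Longrightarrow> \<bar>t - w\<bar> < r \<Longrightarrow> (k u has_real_derivative k' u t) (at t)"
    and bd: "\<And>u t. u \<in> space N \<Longrightarrow> \<bar>t - w\<bar> < r \<Longrightarrow> \<bar>k' u t\<bar> \<le> e u"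
    and e: "integrable N e"
    and m': "(\<lambda>u. k' u w) \<in> borel_measurable N"
  shows "((\<lambda>t. \<integral>u. k u t \<partial>N) has_real_derivative (\<integral>u. k' u w \<partial>N)) (at w)"
proof -
  define s where "s h u = (if \<bar>h\<bar> < r then (k u (w + h) - k u w) / h else 0)" for h u
  have sm: "s h \<in> borel_measurable N" for h
  proof (cases "\<bar>h\<bar> < r")
    case True
    then have "(\<lambda>u. (k u (w + h) - k u w) / h) \<in> borel_measurable N"
      using int[of "w+h"] int[of w] r by (intro borel_measurable_divide borel_measurable_diff) auto
    then show ?thesis using True unfolding s_def by simp
  next
    case False then show ?thesis unfolding s_def by simp
  qed
  have lim: "AE u in N. ((\<lambda>h. s h u) \<longlongrightarrow> k' u w) (at 0)"
  proof (rule AE_I2)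
    fix u assume u: "u \<in> space N"
    have "((\<lambda>h. (k u (w + h) - k u w) / h) \<longlongrightarrow> k' u w) (at 0)"
      using der[OF u, of w] r by (simp add: DERIV_def)
    moreover have "\<forall>\<^sub>F h in at 0. (k u (w + h) - k u w) / h = s h u"
      using eventually_at_ball[OF r, of 0 UNIV] by eventually_elim (auto simp: s_def dist_norm)
    ultimately show "((\<lambda>h. s h u) \<longlongrightarrow> k' u w) (at 0)"
      by (rule Lim_transform_eventually)
  qed
  have bound: "\<forall>\<^sub>F h in at 0. AE u in N. norm (s h u) \<le> e u"
    using eventually_at_ball[OF r, of 0 UNIV]
  proof eventually_elim
    case (elim h)
    then have h: "\<bar>h\<bar> < r" by (auto simp: dist_norm)
    show ?case
    proof (rule AE_I2)
      fix u assume u: "u \<in> space N"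
      have e0: "0 \<le> e u" using bd[OF u, of w] r by (smt (verit))
      have "\<bar>k u (w + h) - k u w\<bar> \<le> e u * \<bar>(w + h) - w\<bar>"
        by (rule mvt_bound[where g'="k' u"]) (use h in \<open>auto intro!: der[OF u] bd[OF u]\<close>)
      then show "norm (s h u) \<le> e u"
        using h e0 by (cases "h = 0") (simp_all add: s_def abs_divide divide_le_eq)
    qed
  qed
  have "((\<lambda>h. \<integral>u. s h u \<partial>N) \<longlongrightarrow> (\<integral>u. k' u w \<partial>N)) (at 0)"
    by (rule tendsto_integral_at[OF m' sm e lim bound])
  moreover have "\<forall>\<^sub>F h in at 0. (\<integral>u. s h u \<partial>N) = ((\<integral>u. k u (w + h) \<partial>N) - (\<integral>u. k u w \<partial>N)) / h"
    using eventually_at_ball[OF r, of 0 UNIV]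
  proof eventually_elim
    case (elim h)
    then have h: "\<bar>h\<bar> < r" by (auto simp: dist_norm)
    have "(\<integral>u. s h u \<partial>N) = (\<integral>u. (k u (w + h) - k u w) / h \<partial>N)"
      using h unfolding s_def by simp
    also have "\<dots> = ((\<integral>u. k u (w + h) \<partial>N) - (\<integral>u. k u w \<partial>N)) / h"
      using int[of "w+h"] int[of w] h r by simp
    finally show ?case .
  qed
  ultimately show ?thesis
    unfolding DERIV_def by (rule Lim_transform_eventually)
qed

lemma cont_integral:
  fixes k :: "'b \<Rightarrow> real \<Rightarrow> real" and N :: "'b measure"
  assumes r: "r > 0"
    and m: "\<And>t. (\<lambda>u. k u t) \<in> borel_measurable N"
    and c: "\<And>u. u \<in> space N \<Longrightarrow> isCont (k u) w"
    and bd: "\<And>u t. u \<in> space N \<Longrightarrow> \<bar>t - w\<bar> < r \<Longrightarrow> \<bar>k u t\<bar> \<le> e u"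
    and e: "integrable N e"
  shows "isCont (\<lambda>t. \<integral>u. k u t \<partial>N) w"
  unfolding isCont_def
proof (rule tendsto_integral_at[OF m m e])
  show "AE u in N. ((\<lambda>t. k u t) \<longlongrightarrow> k u w) (at w)"
    using c by (auto simp: isCont_def)
  show "\<forall>\<^sub>F t in at w. AE u in N. norm (k u t) \<le> e u"
    using eventually_at_ball[OF r, of w UNIV]
    by eventually_elim (auto simp: dist_norm intro!: bd abs_minus_commute)
qed




definition nd :: "real \<Rightarrow> real \<Rightarrow> real" where "nd \<sigma> x = normal_density 0 \<sigma> x"
definition nd1 :: "real \<Rightarrow> real \<Rightarrow> real" where "nd1 \<sigma> x = - x / \<sigma>\<^sup>2 * nd \<sigma> x"
definition nd2 :: "real \<Rightarrow> real \<Rightarrow> real" where "nd2 \<sigma> x = (x\<^sup>2 / \<sigma>^4 - 1 / \<sigma>\<^sup>2) * nd \<sigma> x"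

lemma nd_alt: "nd \<sigma> x = exp (- x\<^sup>2 / (2 * \<sigma>\<^sup>2)) / sqrt (2 * pi * \<sigma>\<^sup>2)"
  by (simp add: nd_def normal_density_def)

lemma nd_nonneg[simp]: "0 \<le> nd \<sigma> x" by (simp add: nd_def)

lemma nd_even: "nd \<sigma> (- x) = nd \<sigma> x" by (simp add: nd_alt)

lemma nd_mono: assumes "\<bar>s\<bar> \<le> \<bar>t\<bar>" shows "nd \<sigma> t \<le> nd \<sigma> s"
proof -
  have "t\<^sup>2 \<ge> s\<^sup>2" using assms by (metis abs_le_square_iff)
  then have "- t\<^sup>2 / (2 * \<sigma>\<^sup>2) \<le> - s\<^sup>2 / (2 * \<sigma>\<^sup>2)"
    by (intro divide_right_mono) auto
  then show ?thesis unfolding nd_alt by (intro divide_right_mono) auto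
qed

lemma nd_deriv: "\<sigma> > 0 \<Longrightarrow> (nd \<sigma> has_real_derivative nd1 \<sigma> x) (at x)"
  unfolding nd_alt[abs_def] nd1_def nd_alt
  by (auto intro!: derivative_eq_intros simp: field_simps power2_eq_square)

lemma nd1_deriv: assumes s: "\<sigma> > 0" shows "(nd1 \<sigma> has_real_derivative nd2 \<sigma> x) (at x)"
proof -
  have "((\<lambda>x. (- x / \<sigma>\<^sup>2) * nd \<sigma> x) has_real_derivative ((- 1 / \<sigma>\<^sup>2) * nd \<sigma> x + (- x / \<sigma>\<^sup>2) * nd1 \<sigma> x)) (at x)"
  proof -
    have d0: "((\<lambda>x. (-1/\<sigma>\<^sup>2) * x) has_real_derivative (-1/\<sigma>\<^sup>2) * 1) (at x)"
      by (intro DERIV_cmult DERIV_ident)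
    have d1: "((\<lambda>x. - x / \<sigma>\<^sup>2) has_real_derivative (-1/\<sigma>\<^sup>2)) (at x)"
      using d0 by simp
    from DERIV_mult[OF d1 nd_deriv[OF s]] show ?thesis by (simp add: mult.commute)
  qed
  moreover have "(- 1 / \<sigma>\<^sup>2) * nd \<sigma> x + (- x / \<sigma>\<^sup>2) * nd1 \<sigma> x = nd2 \<sigma> x"
    using s by (simp add: nd1_def nd2_def field_simps power2_eq_square power4_eq_xxxx)
  ultimately show ?thesis by (simp add: nd1_def[abs_def])
qed

lemma exp_bound1: fixes x \<sigma> :: real assumes "\<sigma> > 0" shows "\<bar>x\<bar> * exp (- x\<^sup>2 / (2 * \<sigma>\<^sup>2)) \<le> \<sigma>"
proof -
  have "\<bar>x\<bar> / \<sigma> \<le> 1 + x\<^sup>2 / (2 * \<sigma>\<^sup>2)"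
  proof -
    have "0 \<le> (\<bar>x\<bar> / \<sigma> - 1)\<^sup>2" by simp
    then have a: "2 * (\<bar>x\<bar> / \<sigma>) \<le> 1 + (\<bar>x\<bar> / \<sigma>)\<^sup>2" by (simp add: power2_eq_square algebra_simps)
    have "(\<bar>x\<bar> / \<sigma>)\<^sup>2 = x\<^sup>2 / \<sigma>\<^sup>2" by (simp add: power_divide)
    with a have "\<bar>x\<bar> / \<sigma> \<le> 1 + (1/2) * (x\<^sup>2 / \<sigma>\<^sup>2)" by linarith
    then show ?thesis by simp
  qed
  also have "\<dots> \<le> exp (x\<^sup>2 / (2 * \<sigma>\<^sup>2))" by (rule exp_ge_add_one_self)
  finally have "\<bar>x\<bar> \<le> \<sigma> * exp (x\<^sup>2 / (2 * \<sigma>\<^sup>2))" using assms by (simp add: field_simps)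
  then have "\<bar>x\<bar> * exp (- x\<^sup>2 / (2 * \<sigma>\<^sup>2)) \<le> \<sigma> * exp (x\<^sup>2 / (2 * \<sigma>\<^sup>2)) * exp (- x\<^sup>2 / (2 * \<sigma>\<^sup>2))"
    by (intro mult_right_mono) auto
  also have "\<dots> = \<sigma>" by (simp add: mult.assoc exp_add[symmetric])
  finally show ?thesis .
qed

lemma exp_bound2: fixes x \<sigma> :: real assumes "\<sigma> > 0" shows "x\<^sup>2 * exp (- x\<^sup>2 / (2 * \<sigma>\<^sup>2)) \<le> 2 * \<sigma>\<^sup>2"
proof -
  have "x\<^sup>2 / (2 * \<sigma>\<^sup>2) \<le> 1 + x\<^sup>2 / (2 * \<sigma>\<^sup>2)" by simp
  also have "\<dots> \<le> exp (x\<^sup>2 / (2 * \<sigma>\<^sup>2))" by (rule exp_ge_add_one_self)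
  finally have "x\<^sup>2 \<le> 2 * \<sigma>\<^sup>2 * exp (x\<^sup>2 / (2 * \<sigma>\<^sup>2))" using assms by (simp add: field_simps)
  then have "x\<^sup>2 * exp (- x\<^sup>2 / (2 * \<sigma>\<^sup>2)) \<le> 2 * \<sigma>\<^sup>2 * exp (x\<^sup>2 / (2 * \<sigma>\<^sup>2)) * exp (- x\<^sup>2 / (2 * \<sigma>\<^sup>2))"
    by (intro mult_right_mono) auto
  also have "\<dots> = 2 * \<sigma>\<^sup>2" by (simp add: mult.assoc exp_add[symmetric])
  finally show ?thesis .
qed

lemma sqrt_2pi_ge: "\<sigma> > 0 \<Longrightarrow> \<sigma> \<le> sqrt (2 * pi * \<sigma>\<^sup>2)"
proof -
  assume s: "\<sigma> > 0"
  have "1 * \<sigma>\<^sup>2 \<le> (2 * pi) * \<sigma>\<^sup>2"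
    by (rule mult_right_mono) (use pi_gt3 in auto)
  then have "sqrt (\<sigma>\<^sup>2) \<le> sqrt (2 * pi * \<sigma>\<^sup>2)"
    by (intro real_sqrt_le_mono) simp
  then show ?thesis using s by simp
qed

lemma nd_bound: assumes "0 < \<sigma>0" "\<sigma>0 \<le> \<sigma>" shows "nd \<sigma> x \<le> 1 / \<sigma>0"
proof -
  have "nd \<sigma> x \<le> 1 / sqrt (2 * pi * \<sigma>\<^sup>2)" unfolding nd_alt
    by (intro divide_right_mono) auto
  also have "\<dots> \<le> 1 / \<sigma>0" using sqrt_2pi_ge[of \<sigma>] assms
    by (intro divide_left_mono) auto
  finally show ?thesis .
qed

lemma nd1_bound: assumes "0 < \<sigma>0" "\<sigma>0 \<le> \<sigma>" shows "\<bar>nd1 \<sigma> x\<bar> \<le> 1 / \<sigma>0\<^sup>2"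
proof -
  have s: "\<sigma> > 0" using assms by auto
  have "\<bar>nd1 \<sigma> x\<bar> = \<bar>x\<bar> * exp (- x\<^sup>2 / (2 * \<sigma>\<^sup>2)) / (\<sigma>\<^sup>2 * sqrt (2 * pi * \<sigma>\<^sup>2))"
    by (simp add: nd1_def nd_alt abs_mult abs_divide)
  also have "\<dots> \<le> \<sigma> / (\<sigma>\<^sup>2 * \<sigma>)"
    using exp_bound1[OF s, of x] sqrt_2pi_ge[OF s] s
    by (intro frac_le mult_left_mono) auto
  also have "\<dots> = 1 / \<sigma>\<^sup>2" using s by (simp add: power2_eq_square)
  also have "\<dots> \<le> 1 / \<sigma>0\<^sup>2" using assms by (intro divide_left_mono power_mono) auto
  finally show ?thesis .
qed

lemma nd2_bound: assumes "0 < \<sigma>0" "\<sigma>0 \<le> \<sigma>" shows "\<bar>nd2 \<sigma> x\<bar> \<le> 3 / \<sigma>0^3"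
proof -
  have s: "\<sigma> > 0" using assms by auto
  have "\<bar>nd2 \<sigma> x\<bar> \<le> (x\<^sup>2 / \<sigma>^4 + 1 / \<sigma>\<^sup>2) * nd \<sigma> x"
    unfolding nd2_def abs_mult abs_of_nonneg[OF nd_nonneg] using s abs_triangle_ineq4[of "x\<^sup>2 / \<sigma>^4" "1 / \<sigma>\<^sup>2"]
    by (intro mult_right_mono) auto
  also have "\<dots> = (x\<^sup>2 * exp (- x\<^sup>2 / (2 * \<sigma>\<^sup>2)) / \<sigma>^4 + exp (- x\<^sup>2 / (2 * \<sigma>\<^sup>2)) / \<sigma>\<^sup>2) / sqrt (2 * pi * \<sigma>\<^sup>2)"
    by (simp add: nd_alt field_simps)
  also have "\<dots> \<le> (2 * \<sigma>\<^sup>2 / \<sigma>^4 + 1 / \<sigma>\<^sup>2) / \<sigma>"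
    using exp_bound2[OF s, of x] sqrt_2pi_ge[OF s] s
    by (intro frac_le add_mono divide_right_mono) auto
  also have "\<dots> = 3 / \<sigma>^3" using s by (simp add: field_simps power2_eq_square power4_eq_xxxx power3_eq_cube)
  also have "\<dots> \<le> 3 / \<sigma>0^3" using assms by (intro divide_left_mono power_mono) auto
  finally show ?thesis .
qed




lemma integrable_shift: fixes g :: "real \<Rightarrow> real" shows "integrable lborel g \<Longrightarrow> integrable lborel (\<lambda>u. g (u - w :: real))"
  using lborel_integrable_real_affine[of g 1 "-w"] by simp

lemma integral_shift: fixes g :: "real \<Rightarrow> real" shows "(\<integral>u. g (u - w :: real) \<partial>lborel) = (\<integral>u. g u \<partial>lborel)"
  using lborel_integral_real_affine[of 1 g "-w"] by simp

lemma nd_measurable[measurable]: "nd \<sigma> \<in> borel_measurable borel"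
  unfolding nd_def[abs_def] by measurable

lemma nd1_measurable[measurable]: "nd1 \<sigma> \<in> borel_measurable borel"
  unfolding nd1_def[abs_def] by measurable

lemma nd_integrable: "\<sigma> > 0 \<Longrightarrow> integrable lborel (nd \<sigma>)"
  unfolding nd_def[abs_def] by simp

lemma nd_integral: "\<sigma> > 0 \<Longrightarrow> (\<integral>x. nd \<sigma> x \<partial>lborel) = 1"
  unfolding nd_def[abs_def] by simp

lemma nd_abs_moment: assumes "\<sigma> > 0"
  shows "integrable lborel (\<lambda>x. nd \<sigma> x * \<bar>x\<bar>)" "(\<integral>x. nd \<sigma> x * \<bar>x\<bar> \<partial>lborel) = \<sigma> * sqrt (2 / pi)"
  using normal_moment_abs_odd[OF assms, of 0 0] unfolding nd_def[abs_def]
  by (auto simp: has_bochner_integral_iff)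

lemma nd1_abs_eq: "(\<lambda>x. \<bar>nd1 \<sigma> x\<bar>) = (\<lambda>x. (1 / \<sigma>\<^sup>2) * (nd \<sigma> x * \<bar>x\<bar>))"
  by (auto simp: nd1_def abs_mult abs_divide)

lemma nd1_abs_integrable: assumes "\<sigma> > 0" shows "integrable lborel (\<lambda>x. \<bar>nd1 \<sigma> x\<bar>)"
proof -
  have "integrable lborel (\<lambda>x. (1 / \<sigma>\<^sup>2) * (nd \<sigma> x * \<bar>x\<bar>))"
    using nd_abs_moment(1)[OF assms] by simp
  then show ?thesis unfolding nd1_abs_eq .
qed

lemma nd1_abs_integral: assumes "\<sigma> > 0" shows "(\<integral>x. \<bar>nd1 \<sigma> x\<bar> \<partial>lborel) \<le> 1 / \<sigma>"
proof -
  have "(\<integral>x. \<bar>nd1 \<sigma> x\<bar> \<partial>lborel) = (\<integral>x. (1 / \<sigma>\<^sup>2) * (nd \<sigma> x * \<bar>x\<bar>) \<partial>lborel)"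
    unfolding nd1_abs_eq ..
  also have "\<dots> = (1 / \<sigma>\<^sup>2) * (\<sigma> * sqrt (2 / pi))"
    using nd_abs_moment[OF assms] by simp
  also have "\<dots> \<le> (1 / \<sigma>\<^sup>2) * (\<sigma> * 1)"
  proof -
    have "sqrt (2 / pi) \<le> 1" using pi_gt3 by (simp add: divide_le_eq)
    then show ?thesis using assms by (intro mult_left_mono) auto
  qed
  also have "\<dots> = 1 / \<sigma>" using assms by (simp add: power2_eq_square)
  finally show ?thesis .
qed

lemma nd_scale: assumes s: "\<sigma> > 0" shows "\<sigma> * nd \<sigma> (\<sigma> * z) = std_normal_density z"
proof -
  have a: "- (\<sigma> * z)\<^sup>2 / (2 * \<sigma>\<^sup>2) = - z\<^sup>2 / 2" using s by (simp add: power_mult_distrib)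
  have b: "sqrt (2 * pi * \<sigma>\<^sup>2) = sqrt (2 * pi) * \<sigma>" using s by (simp add: real_sqrt_mult)
  show ?thesis unfolding nd_alt a b std_normal_density_def using s by simp
qed

definition env :: "real \<Rightarrow> real \<Rightarrow> real" where
  "env \<sigma> x = exp (1 / (2 * \<sigma>\<^sup>2)) * sqrt 2 / \<sigma>\<^sup>2 * ((\<bar>x\<bar> + 1) * nd (sqrt 2 * \<sigma>) x)"

lemma env_integrable: assumes "\<sigma> > 0" shows "integrable lborel (env \<sigma>)"
proof -
  have s: "sqrt 2 * \<sigma> > 0" using assms by simp
  have "integrable lborel (\<lambda>x. exp (1 / (2 * \<sigma>\<^sup>2)) * sqrt 2 / \<sigma>\<^sup>2 * (nd (sqrt 2 * \<sigma>) x * \<bar>x\<bar> + nd (sqrt 2 * \<sigma>) x))"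
    using nd_abs_moment(1)[OF s] nd_integrable[OF s] by auto
  moreover have "(\<lambda>x. exp (1 / (2 * \<sigma>\<^sup>2)) * sqrt 2 / \<sigma>\<^sup>2 * (nd (sqrt 2 * \<sigma>) x * \<bar>x\<bar> + nd (sqrt 2 * \<sigma>) x)) = env \<sigma>"
    unfolding env_def by (auto simp: algebra_simps)
  ultimately show ?thesis by simp
qed

lemma env_nonneg: "0 \<le> env \<sigma> x" unfolding env_def by simp

lemma aux_alg: "(r::real) > 0 \<Longrightarrow> S > 0 \<Longrightarrow> q \<noteq> 0 \<Longrightarrow> A / q * (E1 * E2 / S) = E1 * r / q * (A * (E2 / (r * S)))"
  by (simp add: field_simps)

lemma env_bound: assumes s: "\<sigma> > 0" and tx: "\<bar>t - x\<bar> \<le> 1" shows "\<bar>nd1 \<sigma> t\<bar> \<le> env \<sigma> x"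
proof -
  have xt: "x\<^sup>2 \<le> 2 * t\<^sup>2 + 2"
  proof -
    have "(x - t)\<^sup>2 \<le> 1" using tx by (metis abs_le_square_iff abs_minus_commute abs_one one_power2)
    moreover have "0 \<le> (x - 2 * t)\<^sup>2" by simp
    ultimately show ?thesis by (simp add: power2_eq_square algebra_simps)
  qed
  have s2: "(sqrt 2 * \<sigma>)\<^sup>2 = 2 * \<sigma>\<^sup>2" by (simp add: power_mult_distrib)
  have p: "\<sigma>\<^sup>2 > 0" using s by simp
  have e1: "- t\<^sup>2 / (2 * \<sigma>\<^sup>2) \<le> 1 / (2 * \<sigma>\<^sup>2) + (- x\<^sup>2 / (2 * (sqrt 2 * \<sigma>)\<^sup>2))"
  proof -
    have "- t\<^sup>2 / (2 * \<sigma>\<^sup>2) = (- 2 * t\<^sup>2) / (4 * \<sigma>\<^sup>2)" using p by (simp add: field_simps)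
    also have "\<dots> \<le> (2 - x\<^sup>2) / (4 * \<sigma>\<^sup>2)" using xt p by (intro divide_right_mono) auto
    also have "\<dots> = 1 / (2 * \<sigma>\<^sup>2) + (- x\<^sup>2 / (2 * (sqrt 2 * \<sigma>)\<^sup>2))" unfolding s2 using p by (simp add: field_simps)
    finally show ?thesis .
  qed
  have t1: "\<bar>t\<bar> \<le> \<bar>x\<bar> + 1" using tx by linarith
  have sq: "sqrt (2 * pi * (sqrt 2 * \<sigma>)\<^sup>2) = sqrt 2 * sqrt (2 * pi * \<sigma>\<^sup>2)"
    unfolding s2 by (simp add: real_sqrt_mult[symmetric] ac_simps)
  have "\<bar>nd1 \<sigma> t\<bar> = \<bar>t\<bar> / \<sigma>\<^sup>2 * (exp (- t\<^sup>2 / (2 * \<sigma>\<^sup>2)) / sqrt (2 * pi * \<sigma>\<^sup>2))"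
    by (simp add: nd1_def nd_alt abs_mult abs_divide)
  also have "\<dots> \<le> (\<bar>x\<bar> + 1) / \<sigma>\<^sup>2 * (exp (1 / (2 * \<sigma>\<^sup>2) + (- x\<^sup>2 / (2 * (sqrt 2 * \<sigma>)\<^sup>2))) / sqrt (2 * pi * \<sigma>\<^sup>2))"
    using t1 e1 by (intro mult_mono divide_right_mono) auto
  also have "\<dots> = env \<sigma> x"
    unfolding env_def nd_alt exp_add sq using s
    by (intro aux_alg) auto
  finally show ?thesis .
qed




lemma nd_shift_deriv: "\<sigma> > 0 \<Longrightarrow> ((\<lambda>t. nd \<sigma> (u - t) * c) has_real_derivative (- nd1 \<sigma> (u - t) * c)) (at t)"
proof -
  assume s: "\<sigma> > 0"
  have "((\<lambda>t. u - t) has_real_derivative -1) (at t)" by (auto intro!: derivative_eq_intros)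
  from DERIV_chain2[OF nd_deriv[OF s] this] 
  have "((\<lambda>t. nd \<sigma> (u - t)) has_real_derivative nd1 \<sigma> (u - t) * -1) (at t)" .
  from DERIV_cmult_right[OF this, of c] show ?thesis by simp
qed

lemma nd1_cont: "\<sigma> > 0 \<Longrightarrow> isCont (nd1 \<sigma>) x"
  using nd1_deriv DERIV_isCont by blast

lemma aux_mb1: "0 \<le> (a::real) \<Longrightarrow> \<bar>c\<bar> \<le> B \<Longrightarrow> a * \<bar>c\<bar> \<le> B * a"
  by (metis mult.commute mult_left_mono)
lemma aux_mb2: "0 \<le> (a::real) \<Longrightarrow> \<bar>c\<bar> \<le> B \<Longrightarrow> \<bar>c\<bar> * a \<le> B * a"
  by (metis mult_right_mono)

context
  fixes m :: "real \<Rightarrow> real" and \<sigma> B :: real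
  assumes s: "\<sigma> > 0" and m[measurable]: "m \<in> borel_measurable borel" and mb: "\<And>u. \<bar>m u\<bar> \<le> B"
begin

lemma B_nonneg: "0 \<le> B" using mb[of 0] by linarith

lemma gconv_int: "integrable lborel (\<lambda>u. nd \<sigma> (u - w) * m u)"
proof (rule Bochner_Integration.integrable_bound)
  show "integrable lborel (\<lambda>u. B * nd \<sigma> (u - w))"
    using integrable_shift[OF nd_integrable[OF s], of w] by simp
  show "AE x in lborel. norm (nd \<sigma> (x - w) * m x) \<le> norm (B * nd \<sigma> (x - w))"
    using mb B_nonneg by (auto simp: abs_mult intro!: AE_I2 aux_mb1 aux_mb2)
qed measurable

lemma gconv_int1: "integrable lborel (\<lambda>u. nd1 \<sigma> (u - w) * m u)"
proof (rule Bochner_Integration.integrable_bound)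
  show "integrable lborel (\<lambda>u. B * \<bar>nd1 \<sigma> (u - w)\<bar>)"
    using integrable_shift[OF nd1_abs_integrable[OF s], of w] by simp
  show "AE x in lborel. norm (nd1 \<sigma> (x - w) * m x) \<le> norm (B * \<bar>nd1 \<sigma> (x - w)\<bar>)"
    using mb B_nonneg by (auto simp: abs_mult intro!: AE_I2 aux_mb1 aux_mb2)
qed measurable

lemma gconv_bd0: "\<bar>\<integral>u. nd \<sigma> (u - w) * m u \<partial>lborel\<bar> \<le> B"
proof -
  have "\<bar>\<integral>u. nd \<sigma> (u - w) * m u \<partial>lborel\<bar> \<le> (\<integral>u. \<bar>nd \<sigma> (u - w) * m u\<bar> \<partial>lborel)"
    by (rule integral_abs_bound)
  also have "\<dots> \<le> (\<integral>u. B * nd \<sigma> (u - w) \<partial>lborel)"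
    using integrable_abs[OF gconv_int] integrable_shift[OF nd_integrable[OF s], of w] mb B_nonneg
    by (intro integral_mono) (auto simp: abs_mult intro!: aux_mb1 aux_mb2)
  also have "\<dots> = B" using integral_shift[of "nd \<sigma>" w] nd_integral[OF s] by simp
  finally show ?thesis .
qed

lemma gconv_bd1: "\<bar>\<integral>u. nd1 \<sigma> (u - w) * m u \<partial>lborel\<bar> \<le> B / \<sigma>"
proof -
  have "\<bar>\<integral>u. nd1 \<sigma> (u - w) * m u \<partial>lborel\<bar> \<le> (\<integral>u. \<bar>nd1 \<sigma> (u - w) * m u\<bar> \<partial>lborel)"
    by (rule integral_abs_bound)
  also have "\<dots> \<le> (\<integral>u. B * \<bar>nd1 \<sigma> (u - w)\<bar> \<partial>lborel)"
    using integrable_abs[OF gconv_int1] integrable_shift[OF nd1_abs_integrable[OF s], of w] mb B_nonneg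
    by (intro integral_mono) (auto simp: abs_mult intro!: aux_mb1 aux_mb2)
  also have "\<dots> = B * (\<integral>u. \<bar>nd1 \<sigma> u\<bar> \<partial>lborel)" using integral_shift[of "\<lambda>u. \<bar>nd1 \<sigma> u\<bar>" w] by simp
  also have "\<dots> \<le> B * (1 / \<sigma>)" using nd1_abs_integral[OF s] B_nonneg by (intro mult_left_mono) auto
  finally show ?thesis by simp
qed

lemma env_shift_int: "integrable lborel (\<lambda>u. B * env \<sigma> (u - w))"
  using integrable_shift[OF env_integrable[OF s], of w] by simp

lemma gconv_deriv:
  "((\<lambda>w. \<integral>u. nd \<sigma> (u - w) * m u \<partial>lborel) has_real_derivative (\<integral>u. - nd1 \<sigma> (u - w) * m u \<partial>lborel)) (at w)"
proof (rule deriv_integral[where r=1 and e="\<lambda>u. B * env \<sigma> (u - w)"])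
  show "integrable lborel (\<lambda>u. nd \<sigma> (u - t) * m u)" for t by (rule gconv_int)
  show "((\<lambda>t. nd \<sigma> (u - t) * m u) has_real_derivative - nd1 \<sigma> (u - t) * m u) (at t)" for u t
    by (rule nd_shift_deriv[OF s])
  show "\<bar>- nd1 \<sigma> (u - t) * m u\<bar> \<le> B * env \<sigma> (u - w)" if "\<bar>t - w\<bar> < 1" for u t
  proof -
    have "\<bar>nd1 \<sigma> (u - t)\<bar> \<le> env \<sigma> (u - w)" using that by (intro env_bound[OF s]) auto
    then show ?thesis using mb[of u] B_nonneg env_nonneg[of \<sigma> "u - w"]
      by (simp add: abs_mult mult.commute mult_mono)
  qed
qed (use env_shift_int in auto)

lemma gconv_cont: "isCont (\<lambda>w. \<integral>u. nd1 \<sigma> (u - w) * m u \<partial>lborel) w"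
proof (rule cont_integral[where r=1 and e="\<lambda>u. B * env \<sigma> (u - w)"])
  show "isCont (\<lambda>t. nd1 \<sigma> (u - t) * m u) w" for u
  proof -
    have "isCont (\<lambda>t. nd1 \<sigma> (u - t)) w"
      by (rule isCont_o2[OF _ nd1_cont[OF s]]) (auto intro!: continuous_intros)
    then show ?thesis by (auto intro!: continuous_intros)
  qed
  show "\<bar>nd1 \<sigma> (u - t) * m u\<bar> \<le> B * env \<sigma> (u - w)" if "\<bar>t - w\<bar> < 1" for u t
  proof -
    have "\<bar>nd1 \<sigma> (u - t)\<bar> \<le> env \<sigma> (u - w)" using that by (intro env_bound[OF s]) auto
    then show ?thesis using mb[of u] B_nonneg env_nonneg[of \<sigma> "u - w"]
      by (simp add: abs_mult mult.commute mult_mono)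
  qed
qed (use env_shift_int in auto)

end



locale wsetup = prob_space M for M :: "'a measure" +
  fixes Y Z :: "nat \<Rightarrow> 'a \<Rightarrow> real" and \<epsilon> :: real
  assumes indep: "indep_vars (\<lambda>_. borel) (\<lambda>i. case i of Inl k \<Rightarrow> Y k | Inr k \<Rightarrow> Z k) UNIV"
    and iid: "\<And>k. distr M borel (Y k) = distr M borel (Y 0)"
    and normal: "\<And>k. distributed M lborel (Z k) (\<lambda>x. ennreal (std_normal_density x))"
    and eps: "\<epsilon> > 0" and Y_ge: "AE \<omega> in M. Y 0 \<omega> \<ge> \<epsilon>"
begin

definition "V = (\<lambda>i. case i of Inl k \<Rightarrow> Y k | Inr k \<Rightarrow> Z k)"
definition "\<nu> = distr M borel (Y 0)"
definition "sg y = sqrt (max y \<epsilon>)"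
definition "s0 = sqrt \<epsilon>"
definition "N01 = density lborel std_normal_density"

lemma s0_pos: "s0 > 0" using eps by (simp add: s0_def)
lemma sg_ge: "s0 \<le> sg y" by (simp add: s0_def sg_def)
lemma sg_pos: "sg y > 0" using s0_pos sg_ge[of y] by linarith

lemma sg_measurable[measurable]: "sg \<in> borel_measurable borel"
  unfolding sg_def[abs_def] by measurable

lemma V_meas: "V i \<in> borel_measurable M"
  using indep unfolding indep_vars_def V_def by auto

lemma Y_meas[measurable]: "Y k \<in> borel_measurable M"
  using V_meas[of "Inl k"] by (simp add: V_def)

lemma Z_meas[measurable]: "Z k \<in> borel_measurable M"
  using V_meas[of "Inr k"] by (simp add: V_def)

lemma W_meas[measurable]: "WY Y Z k \<in> borel_measurable M"
  unfolding WY_def[abs_def] by measurable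

lemma prob_nu: "prob_space \<nu>" unfolding \<nu>_def by (rule prob_space_distr) simp

lemma sets_nu[measurable_cong, simp]: "sets \<nu> = sets borel" by (simp add: \<nu>_def)
lemma space_nu[simp]: "space \<nu> = UNIV" by (simp add: \<nu>_def)

lemma Z_distr: "distr M borel (Z k) = N01"
proof -
  have "distr M borel (Z k) = distr M lborel (Z k)" by (rule distr_cong) auto
  also have "\<dots> = N01" using normal[of k] by (simp add: distributed_def N01_def)
  finally show ?thesis .
qed

lemma prob_N01: "prob_space N01" unfolding N01_def
  using prob_space_normal_density by simp

lemma sets_N01[measurable_cong, simp]: "sets N01 = sets borel" by (simp add: N01_def)

lemma indep_YZ: "indep_var borel (Y k) borel (Z k)"
proof -
  have "indep_var (PiM {Inl k} (\<lambda>_. borel)) (\<lambda>\<omega>. restrict (\<lambda>i. V i \<omega>) {Inl k})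
                  (PiM {Inr k} (\<lambda>_. borel)) (\<lambda>\<omega>. restrict (\<lambda>i. V i \<omega>) {Inr k})"
    by (rule indep_var_restrict[OF indep[folded V_def]]) auto
  from indep_var_compose[OF this measurable_component_singleton[of "Inl k" "{Inl k}" "\<lambda>_. borel"]
       measurable_component_singleton[of "Inr k" "{Inr k}" "\<lambda>_. borel"]]
  have "indep_var borel ((\<lambda>g. g (Inl k)) \<circ> (\<lambda>\<omega>. restrict (\<lambda>i. V i \<omega>) {Inl k}))
             borel ((\<lambda>g. g (Inr k)) \<circ> (\<lambda>\<omega>. restrict (\<lambda>i. V i \<omega>) {Inr k}))"
    by simp
  then show ?thesis by (simp add: comp_def V_def)
qed

lemma YZ_distr: "distr M (borel \<Otimes>\<^sub>M borel) (\<lambda>\<omega>. (Y k \<omega>, Z k \<omega>)) = \<nu> \<Otimes>\<^sub>M N01"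
  using indep_YZ[of k] unfolding indep_var_distribution_eq
  by (simp add: Z_distr iid[of k] \<nu>_def)

lemma Y_ge_all: "AE \<omega> in M. Y k \<omega> \<ge> \<epsilon>"
proof -
  have "AE y in distr M borel (Y 0). y \<ge> \<epsilon>" using Y_ge by (subst AE_distr_iff) auto
  then have "AE y in distr M borel (Y k). y \<ge> \<epsilon>" by (subst iid[of k])
  then show ?thesis by (subst (asm) AE_distr_iff) auto
qed

lemma AE_nu: "AE y in \<nu>. y \<ge> \<epsilon>"
  using Y_ge unfolding \<nu>_def by (subst AE_distr_iff) auto

lemma mixture:
  assumes h[measurable]: "h \<in> borel_measurable borel"
  shows "(\<integral>\<^sup>+\<omega>. h (WY Y Z k \<omega>) \<partial>M) = (\<integral>\<^sup>+y. (\<integral>\<^sup>+u. ennreal (nd (sg y) u) * h u \<partial>lborel) \<partial>\<nu>)"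
proof -
  interpret N: prob_space N01 by (rule prob_N01)
  interpret nu: prob_space \<nu> by (rule prob_nu)
  interpret P: pair_sigma_finite \<nu> N01 ..
  have "(\<integral>\<^sup>+\<omega>. h (WY Y Z k \<omega>) \<partial>M) = (\<integral>\<^sup>+\<omega>. h (sg (Y k \<omega>) * Z k \<omega>) \<partial>M)"
    using Y_ge_all[of k] by (intro nn_integral_cong_AE) (auto simp: WY_def sg_def max_def)
  also have "\<dots> = (\<integral>\<^sup>+p. h (sg (fst p) * snd p) \<partial>distr M (borel \<Otimes>\<^sub>M borel) (\<lambda>\<omega>. (Y k \<omega>, Z k \<omega>)))"
    by (subst nn_integral_distr) auto
  also have "\<dots> = (\<integral>\<^sup>+p. h (sg (fst p) * snd p) \<partial>(\<nu> \<Otimes>\<^sub>M N01))" by (simp only: YZ_distr)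
  also have "\<dots> = (\<integral>\<^sup>+y. (\<integral>\<^sup>+z. h (sg y * z) \<partial>N01) \<partial>\<nu>)"
    by (subst N.nn_integral_fst[symmetric]) auto
  also have "\<dots> = (\<integral>\<^sup>+y. (\<integral>\<^sup>+u. ennreal (nd (sg y) u) * h u \<partial>lborel) \<partial>\<nu>)"
  proof (intro nn_integral_cong)
    fix y
    have sp: "sg y > 0" by (rule sg_pos)
    have "(\<integral>\<^sup>+u. ennreal (nd (sg y) u) * h u \<partial>lborel) = ennreal \<bar>sg y\<bar> * (\<integral>\<^sup>+z. ennreal (nd (sg y) (0 + sg y * z)) * h (0 + sg y * z) \<partial>lborel)"
      using sp by (intro nn_integral_real_affine) auto
    also have "\<dots> = (\<integral>\<^sup>+z. ennreal (std_normal_density z) * h (sg y * z) \<partial>lborel)"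
    proof -
      have eq: "\<bar>sg y\<bar> * nd (sg y) (sg y * z) = std_normal_density z" for z
        using nd_scale[OF sp] sp by simp
      show ?thesis
        by (subst nn_integral_cmult[symmetric]) (auto simp: mult.assoc[symmetric] ennreal_mult'[symmetric] eq)
    qed
    also have "\<dots> = (\<integral>\<^sup>+z. h (sg y * z) \<partial>N01)"
      unfolding N01_def by (subst nn_integral_density) auto
    finally show "(\<integral>\<^sup>+z. h (sg y * z) \<partial>N01) = (\<integral>\<^sup>+u. ennreal (nd (sg y) u) * h u \<partial>lborel)" ..
  qed
  finally show ?thesis .
qed

end



lemma nd_meas2[measurable (raw)]:
  assumes [measurable]: "g \<in> borel_measurable N" "h \<in> borel_measurable N"
  shows "(\<lambda>x. nd (g x) (h x)) \<in> borel_measurable N"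
  unfolding nd_alt by measurable
lemma nd1_meas2[measurable (raw)]:
  assumes [measurable]: "g \<in> borel_measurable N" "h \<in> borel_measurable N"
  shows "(\<lambda>x. nd1 (g x) (h x)) \<in> borel_measurable N"
  unfolding nd1_def by measurable
lemma nd2_meas2[measurable (raw)]:
  assumes [measurable]: "g \<in> borel_measurable N" "h \<in> borel_measurable N"
  shows "(\<lambda>x. nd2 (g x) (h x)) \<in> borel_measurable N"
  unfolding nd2_def by measurable

lemma (in prob_space) abs_integral_le_const:
  fixes g :: "'a \<Rightarrow> real"
  assumes "g \<in> borel_measurable M" "\<And>x. \<bar>g x\<bar> \<le> C"
  shows "\<bar>\<integral>x. g x \<partial>M\<bar> \<le> C"
proof -
  have "\<bar>\<integral>x. g x \<partial>M\<bar> \<le> (\<integral>x. \<bar>g x\<bar> \<partial>M)" by (rule integral_abs_bound)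
  also have "\<dots> \<le> (\<integral>x. C \<partial>M)"
    using assms order_trans[OF abs_ge_zero assms(2)] by (intro integral_mono integrable_const_bound[where B=C]) auto
  also have "\<dots> = C" by (simp add: prob_space)
  finally show ?thesis .
qed

context wsetup
begin

definition "fd x = (\<integral>y. nd (sg y) x \<partial>\<nu>)"
definition "fd1 x = (\<integral>y. nd1 (sg y) x \<partial>\<nu>)"
definition "fd2 x = (\<integral>y. nd2 (sg y) x \<partial>\<nu>)"
definition "law = distr M borel (WY Y Z 0)"

lemma nd_sg_int: "integrable \<nu> (\<lambda>y. nd (sg y) x)"
proof -
  interpret nu: prob_space \<nu> by (rule prob_nu)
  show ?thesis using nd_bound[OF s0_pos sg_ge] by (intro nu.integrable_const_bound[where B="1/s0"]) auto
qed

lemma fd_meas[measurable]: "fd \<in> borel_measurable borel"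
proof -
  interpret nu: prob_space \<nu> by (rule prob_nu)
  show ?thesis unfolding fd_def[abs_def] by measurable
qed

lemma fd_nonneg: "0 \<le> fd x" unfolding fd_def by simp

lemma fd_bound: "\<bar>fd x\<bar> \<le> 1 / s0"
proof -
  interpret nu: prob_space \<nu> by (rule prob_nu)
  show ?thesis unfolding fd_def using nd_bound[OF s0_pos sg_ge]
    by (intro nu.abs_integral_le_const) auto
qed

lemma fd1_bound: "\<bar>fd1 x\<bar> \<le> 1 / s0\<^sup>2"
proof -
  interpret nu: prob_space \<nu> by (rule prob_nu)
  show ?thesis unfolding fd1_def using nd1_bound[OF s0_pos sg_ge]
    by (intro nu.abs_integral_le_const) auto
qed

lemma fd2_bound: "\<bar>fd2 x\<bar> \<le> 3 / s0^3"
proof -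
  interpret nu: prob_space \<nu> by (rule prob_nu)
  show ?thesis unfolding fd2_def using nd2_bound[OF s0_pos sg_ge]
    by (intro nu.abs_integral_le_const) auto
qed

lemma fd_deriv: "(fd has_real_derivative fd1 x) (at x)"
proof -
  interpret nu: prob_space \<nu> by (rule prob_nu)
  show ?thesis unfolding fd_def[abs_def] fd1_def
    using nd_bound[OF s0_pos sg_ge] nd1_bound[OF s0_pos sg_ge]
    by (intro deriv_integral[where r=1 and e="\<lambda>_. 1 / s0\<^sup>2"] nd_deriv sg_pos nu.integrable_const_bound[where B="1/s0"] nu.integrable_const) auto
qed

lemma fd1_deriv: "(fd1 has_real_derivative fd2 x) (at x)"
proof -
  interpret nu: prob_space \<nu> by (rule prob_nu)
  show ?thesis unfolding fd1_def[abs_def] fd2_def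
    using nd1_bound[OF s0_pos sg_ge] nd2_bound[OF s0_pos sg_ge]
    by (intro deriv_integral[where r=1 and e="\<lambda>_. 3 / s0^3"] nd1_deriv sg_pos nu.integrable_const_bound[where B="1/s0\<^sup>2"] nu.integrable_const) auto
qed

lemma nn_fd: "(\<integral>\<^sup>+y. ennreal (nd (sg y) u) \<partial>\<nu>) = ennreal (fd u)"
  unfolding fd_def by (intro nn_integral_eq_integral nd_sg_int) auto

lemma W_distr: "distr M borel (WY Y Z k) = density lborel fd"
proof (rule measure_eqI)
  interpret nu: prob_space \<nu> by (rule prob_nu)
  interpret P: pair_sigma_finite \<nu> lborel ..
  show "sets (distr M borel (WY Y Z k)) = sets (density lborel fd)" by simp
  fix A assume A: "A \<in> sets (distr M borel (WY Y Z k))"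
  then have A'[measurable]: "A \<in> sets borel" by simp
  have "emeasure (distr M borel (WY Y Z k)) A = emeasure M (WY Y Z k -` A \<inter> space M)"
    by (rule emeasure_distr[OF W_meas A'])
  also have "\<dots> = (\<integral>\<^sup>+\<omega>. indicator (WY Y Z k -` A \<inter> space M) \<omega> \<partial>M)"
    using measurable_sets[OF W_meas A'] by (intro nn_integral_indicator[symmetric])
  also have "\<dots> = (\<integral>\<^sup>+\<omega>. indicator A (WY Y Z k \<omega>) \<partial>M)"
    by (intro nn_integral_cong) (auto split: split_indicator)
  also have "\<dots> = (\<integral>\<^sup>+y. (\<integral>\<^sup>+u. ennreal (nd (sg y) u) * indicator A u \<partial>lborel) \<partial>\<nu>)"
    using A' by (intro mixture) auto
  also have "\<dots> = (\<integral>\<^sup>+u. (\<integral>\<^sup>+y. ennreal (nd (sg y) u) * indicator A u \<partial>\<nu>) \<partial>lborel)"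
    using A' by (intro P.Fubini'[symmetric]) measurable
  also have "\<dots> = (\<integral>\<^sup>+u. ennreal (fd u) * indicator A u \<partial>lborel)"
    using A' by (intro nn_integral_cong) (simp add: nn_integral_multc nn_fd)
  also have "\<dots> = emeasure (density lborel fd) A"
    using A' by (simp add: emeasure_density mult.commute)
  finally show "emeasure (distr M borel (WY Y Z k)) A = emeasure (density lborel fd) A" .
qed

lemma distributed_W: "distributed M lborel (WY Y Z 0) (\<lambda>x. ennreal (fd x))"
proof -
  have "distr M lborel (WY Y Z 0) = distr M borel (WY Y Z 0)" by (rule distr_cong) auto
  then show ?thesis unfolding distributed_def using W_distr[of 0] by simp
qed

end



lemma unif_cont_deriv:
  fixes g g' :: "real \<Rightarrow> real"
  assumes d: "\<And>x. (g has_real_derivative g' x) (at x)" and b: "\<And>x. \<bar>g' x\<bar> \<le> B"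
  shows "uniformly_continuous_on UNIV g"
  unfolding uniformly_continuous_on_def
proof (intro allI impI)
  fix e :: real assume e: "e > 0"
  have B0: "0 \<le> B" using b[of 0] by linarith
  show "\<exists>d>0. \<forall>x\<in>UNIV. \<forall>x'\<in>UNIV. dist x' x < d \<longrightarrow> dist (g x') (g x) < e"
  proof (intro exI[of _ "e / (B + 1)"] conjI ballI impI)
    show "e / (B + 1) > 0" using e B0 by simp
    fix x x' :: real assume "dist x' x < e / (B + 1)"
    then have xx: "\<bar>x' - x\<bar> < e / (B + 1)" by (simp add: dist_real_def)
    have "\<bar>g x' - g x\<bar> \<le> B * \<bar>x' - x\<bar>" by (rule mvt_bound[OF d b])
    also have "\<dots> \<le> (B + 1) * \<bar>x' - x\<bar>" by (intro mult_right_mono) auto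
    also have "\<dots> < (B + 1) * (e / (B + 1))" using xx B0 by (intro mult_strict_left_mono) auto
    also have "\<dots> = e" using B0 by simp
    finally show "dist (g x') (g x) < e" by (simp add: dist_real_def)
  qed
qed

lemma bounded_range_abs: "(\<And>x. \<bar>g x :: real\<bar> \<le> C) \<Longrightarrow> bounded (range g)"
  unfolding bounded_iff by auto

context wsetup
begin

lemma fd_even: "fd (- x) = fd x" unfolding fd_def by (simp add: nd_even)

lemma fd_mono: "\<bar>s\<bar> \<le> \<bar>t\<bar> \<Longrightarrow> fd t \<le> fd s"
  unfolding fd_def by (intro integral_mono nd_sg_int nd_mono)

lemma fd_cont: "isCont fd x" using fd_deriv DERIV_isCont by blast

lemma law_eq: "law = density lborel fd" unfolding law_def by (rule W_distr)
lemma W_law: "distr M borel (WY Y Z k) = law" by (simp add: law_eq W_distr)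

lemma prob_law: "prob_space law" unfolding law_def by (rule prob_space_distr) simp
lemma sets_law[measurable_cong, simp]: "sets law = sets borel" by (simp add: law_def)
lemma space_law[simp]: "space law = UNIV" by (simp add: law_def)

lemma measure_law_Ioc: assumes "a \<le> t" shows "measure law {a<..t} = (LBINT u=a..t. fd u)"
proof -
  have "measure law {a<..t} = enn2real (\<integral>\<^sup>+u. ennreal (fd u) * indicator {a<..t} u \<partial>lborel)"
    unfolding law_eq measure_def by (subst emeasure_density) auto
  also have "\<dots> = (\<integral>u. fd u * indicator {a<..t} u \<partial>lborel)"
    by (intro enn2real_nn_integral_eq_integral) (auto simp: fd_nonneg split: split_indicator)
  also have "\<dots> = (LBINT u:{a<..t}. fd u)"
    unfolding set_lebesgue_integral_def by (simp add: mult.commute)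
  also have "\<dots> = (LBINT u=a..t. fd u)" using assms by (simp add: interval_integral_Ioc)
  finally show ?thesis .
qed

lemma cdf_deriv: "((\<lambda>t. measure law {..t}) has_real_derivative fd x) (at x)"
proof -
  interpret L: prob_space law by (rule prob_law)
  let ?a = "x - 1" and ?b = "x + 1"
  have "((\<lambda>u. LBINT y=?a..u. fd y) has_vector_derivative fd x) (at x within {?a..?b})"
    using fd_cont by (intro interval_integral_FTC2 continuous_at_imp_continuous_on) auto
  then have "((\<lambda>u. LBINT y=?a..u. fd y) has_real_derivative fd x) (at x)"
    by (simp add: has_real_derivative_iff_has_vector_derivative at_within_Icc_at)
  then have "((\<lambda>u. measure law {..?a} + (LBINT y=?a..u. fd y)) has_real_derivative fd x) (at x)"
    by (auto intro!: derivative_eq_intros)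
  then show ?thesis
  proof (rule has_field_derivative_transform_within_open[where S="{?a<..<?b}"])
    fix t assume t: "t \<in> {?a<..<?b}"
    have "measure law {..t} = measure law {..?a} + measure law ({..t} - {..?a})"
      using t by (subst L.finite_measure_Diff) auto
    also have "{..t} - {..?a} = {?a<..t}" by auto
    finally show "measure law {..?a} + (LBINT y=?a..t. fd y) = measure law {..t}"
      using t measure_law_Ioc[of ?a t] by simp
  qed auto
qed

lemma part_a:
  "\<exists>f f' f''. distributed M lborel (WY Y Z 0) (\<lambda>x. ennreal (f x))
        \<and> (\<forall>x. (f has_real_derivative f' x) (at x))
        \<and> (\<forall>x. (f' has_real_derivative f'' x) (at x))
        \<and> continuous_on UNIV f'
        \<and> bounded (range f) \<and> bounded (range f') \<and> bounded (range f'')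
        \<and> uniformly_continuous_on UNIV f \<and> uniformly_continuous_on UNIV f'"
proof (intro exI conjI allI)
  show "distributed M lborel (WY Y Z 0) (\<lambda>x. ennreal (fd x))" by (rule distributed_W)
  show "(fd has_real_derivative fd1 x) (at x)" for x by (rule fd_deriv)
  show "(fd1 has_real_derivative fd2 x) (at x)" for x by (rule fd1_deriv)
  show "continuous_on UNIV fd1"
    using fd1_deriv by (intro continuous_at_imp_continuous_on) (blast intro: DERIV_isCont)
  show "bounded (range fd)" by (rule bounded_range_abs[OF fd_bound])
  show "bounded (range fd1)" by (rule bounded_range_abs[OF fd1_bound])
  show "bounded (range fd2)" by (rule bounded_range_abs[OF fd2_bound])
  show "uniformly_continuous_on UNIV fd" by (rule unif_cont_deriv[OF fd_deriv fd1_bound])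
  show "uniformly_continuous_on UNIV fd1" by (rule unif_cont_deriv[OF fd1_deriv fd2_bound])
qed

end



lemma ball_Suc_iff: "(\<forall>k\<in>{1..Suc n}. P k) \<longleftrightarrow> P 1 \<and> (\<forall>k\<in>{1..n}. P (Suc k))"
proof safe
  fix k assume "\<forall>k\<in>{1..Suc n}. P k" "k \<in> {1..n}" then show "P (Suc k)" by auto
next
  fix k assume a: "P 1" "\<forall>k\<in>{1..n}. P (Suc k)" and k: "k \<in> {1..Suc n}"
  show "P k"
  proof (cases k)
    case 0 then show ?thesis using k by auto
  next
    case (Suc k') then show ?thesis using a k by (cases k') auto
  qed
qed auto

lemma PiM_comp_meas[measurable]: "(\<lambda>g. g j) \<in> borel_measurable (PiM B (\<lambda>_. (borel :: real measure)))"
proof (cases "j \<in> B")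
  case True then show ?thesis by (rule measurable_component_singleton)
next
  case False
  have "(\<lambda>g. undefined :: real) \<in> borel_measurable (PiM B (\<lambda>_. borel))" by simp
  then show ?thesis
    by (rule measurable_cong[THEN iffD1, rotated]) (use False in \<open>auto simp: space_PiM PiE_def extensional_def\<close>)
qed

context wsetup
begin

definition Ev :: "nat \<Rightarrow> nat \<Rightarrow> (nat \<Rightarrow> real) \<Rightarrow> real \<Rightarrow> real \<Rightarrow> 'a set" where
  "Ev m n a w x = {\<omega> \<in> space M. w + (\<Sum>i\<in>{Suc m..Suc m + n}. WY Y Z i \<omega>) \<le> x \<and>
       (\<forall>k\<in>{1..n}. a k \<le> \<bar>w + (\<Sum>i\<in>{Suc m..m + k}. WY Y Z i \<omega>)\<bar>)}"

lemma Ev_pred: "Measurable.pred (borel \<Otimes>\<^sub>M M) (\<lambda>(w, \<omega>). w + (\<Sum>i\<in>{Suc m..Suc m + n}. WY Y Z i \<omega>) \<le> x \<and>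
       (\<forall>k\<in>{1..n}. a k \<le> \<bar>w + (\<Sum>i\<in>{Suc m..m + k}. WY Y Z i \<omega>)\<bar>))"
  by measurable

lemma Ev_sets[measurable]: "Ev m n a w x \<in> sets M"
proof -
  have "Measurable.pred M (\<lambda>\<omega>. w + (\<Sum>i\<in>{Suc m..Suc m + n}. WY Y Z i \<omega>) \<le> x \<and>
       (\<forall>k\<in>{1..n}. a k \<le> \<bar>w + (\<Sum>i\<in>{Suc m..m + k}. WY Y Z i \<omega>)\<bar>))"
    by measurable
  then show ?thesis unfolding Ev_def by (simp add: pred_def)
qed

lemma Ev_meas_w: "(\<lambda>w. emeasure M (Ev m n a w x)) \<in> borel_measurable borel"
proof -
  have "(\<lambda>w. emeasure M (Pair w -` {p \<in> space (borel \<Otimes>\<^sub>M M). (case p of (w, \<omega>) \<Rightarrow> w + (\<Sum>i\<in>{Suc m..Suc m + n}. WY Y Z i \<omega>) \<le> x \<and>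
       (\<forall>k\<in>{1..n}. a k \<le> \<bar>w + (\<Sum>i\<in>{Suc m..m + k}. WY Y Z i \<omega>)\<bar>))})) \<in> borel_measurable borel"
    using Ev_pred by (intro measurable_emeasure_Pair) (simp add: pred_def)
  moreover have "Pair w -` {p \<in> space (borel \<Otimes>\<^sub>M M). (case p of (w, \<omega>) \<Rightarrow> w + (\<Sum>i\<in>{Suc m..Suc m + n}. WY Y Z i \<omega>) \<le> x \<and>
       (\<forall>k\<in>{1..n}. a k \<le> \<bar>w + (\<Sum>i\<in>{Suc m..m + k}. WY Y Z i \<omega>)\<bar>))} = Ev m n a w x" for w
    by (auto simp: Ev_def space_pair_measure)
  ultimately show ?thesis by simp
qed

lemma R_step:
  "emeasure M (Ev m (Suc n) a w x) =
     (\<integral>\<^sup>+v. indicator {v. a 1 \<le> \<bar>w + v\<bar>} v * emeasure M (Ev (Suc m) n (\<lambda>k. a (Suc k)) (w + v) x) \<partial>law)"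
proof -
  define A where "A = {Inl (Suc m), Inr (Suc m) :: nat + nat}"
  define B where "B = {i :: nat + nat. case i of Inl j \<Rightarrow> Suc m < j | Inr j \<Rightarrow> Suc m < j}"
  define X1 where "X1 \<omega> = restrict (\<lambda>i. V i \<omega>) A" for \<omega>
  define X2 where "X2 \<omega> = restrict (\<lambda>i. V i \<omega>) B" for \<omega>
  define PA where "PA = PiM A (\<lambda>_. borel :: real measure)"
  define PB where "PB = PiM B (\<lambda>_. borel :: real measure)"
  have ind: "indep_var PA X1 PB X2"
    unfolding PA_def PB_def X1_def[abs_def] X2_def[abs_def]
    by (rule indep_var_restrict[OF indep[folded V_def]]) (auto simp: A_def B_def)
  have X1m[measurable]: "X1 \<in> measurable M PA" using indep_var_rv1[OF ind] .
  have X2m[measurable]: "X2 \<in> measurable M PB" using indep_var_rv2[OF ind] .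
  define wj where "wj g j = sqrt (g (Inl j)) * g (Inr j)" for g :: "nat + nat \<Rightarrow> real" and j
  define cond2 where "cond2 u g \<longleftrightarrow> u + (\<Sum>j\<in>{Suc (Suc m)..Suc (Suc m) + n}. wj g j) \<le> x \<and>
     (\<forall>k\<in>{1..n}. a (Suc k) \<le> \<bar>u + (\<Sum>j\<in>{Suc (Suc m)..Suc m + k}. wj g j)\<bar>)" for u g
  define Q :: "real \<Rightarrow> (nat + nat \<Rightarrow> real) \<Rightarrow> ennreal" where "Q v g = indicator {p. a 1 \<le> \<bar>w + fst p\<bar> \<and> cond2 (w + fst p) (snd p)} (v, g)" for v g
  have wjm[measurable]: "(\<lambda>g. wj g j) \<in> borel_measurable PB" for j
    unfolding wj_def PB_def by measurable
  have Qm[measurable]: "(\<lambda>p. Q (fst p) (snd p)) \<in> borel_measurable (borel \<Otimes>\<^sub>M PB)"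
    unfolding Q_def cond2_def by measurable
  have w1: "sqrt (X1 \<omega> (Inl (Suc m))) * X1 \<omega> (Inr (Suc m)) = WY Y Z (Suc m) \<omega>" for \<omega>
    by (simp add: X1_def A_def V_def WY_def)
  have w2: "wj (X2 \<omega>) j = WY Y Z j \<omega>" if "Suc m < j" for \<omega> j
    using that by (simp add: X2_def B_def V_def WY_def wj_def)
  have s2: "(\<Sum>j\<in>{Suc (Suc m)..q}. wj (X2 \<omega>) j) = (\<Sum>j\<in>{Suc (Suc m)..q}. WY Y Z j \<omega>)" for \<omega> q
    by (intro sum.cong) (auto intro!: w2)
  have sA: "(\<Sum>i\<in>{Suc m..Suc m + Suc n}. WY Y Z i \<omega>) = WY Y Z (Suc m) \<omega> + (\<Sum>i\<in>{Suc (Suc m)..Suc (Suc m) + n}. WY Y Z i \<omega>)" for \<omega>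
    by (subst sum.atLeast_Suc_atMost) auto
  have sB: "(\<Sum>i\<in>{Suc m..m + Suc k}. WY Y Z i \<omega>) = WY Y Z (Suc m) \<omega> + (\<Sum>i\<in>{Suc (Suc m)..Suc m + k}. WY Y Z i \<omega>)" for \<omega> k
    by (subst sum.atLeast_Suc_atMost) auto
  have eq1: "indicator (Ev m (Suc n) a w x) \<omega> = Q (WY Y Z (Suc m) \<omega>) (X2 \<omega>)" if "\<omega> \<in> space M" for \<omega>
  proof -
    have "\<omega> \<in> Ev m (Suc n) a w x \<longleftrightarrow> (a 1 \<le> \<bar>w + WY Y Z (Suc m) \<omega>\<bar> \<and> cond2 (w + WY Y Z (Suc m) \<omega>) (X2 \<omega>))"
      unfolding Ev_def cond2_def s2 ball_Suc_iff[of n] sA sB using that by (auto simp: add.assoc)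
    then show ?thesis unfolding Q_def by (simp split: split_indicator)
  qed
  have eq2: "Q v (X2 \<omega>) = indicator {v. a 1 \<le> \<bar>w + v\<bar>} v * indicator (Ev (Suc m) n (\<lambda>k. a (Suc k)) (w + v) x) \<omega>"
    if "\<omega> \<in> space M" for \<omega> v
  proof -
    have "(v, X2 \<omega>) \<in> {p. a 1 \<le> \<bar>w + fst p\<bar> \<and> cond2 (w + fst p) (snd p)} \<longleftrightarrow>
          a 1 \<le> \<bar>w + v\<bar> \<and> \<omega> \<in> Ev (Suc m) n (\<lambda>k. a (Suc k)) (w + v) x"
      unfolding mem_Collect_eq fst_conv snd_conv cond2_def s2 Ev_def using that by auto
    then show ?thesis unfolding Q_def by (simp split: split_indicator)
  qed
  define w1 where "w1 g = sqrt (g (Inl (Suc m))) * g (Inr (Suc m))" for g :: "nat + nat \<Rightarrow> real"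
  have w1m[measurable]: "w1 \<in> borel_measurable PA" unfolding w1_def PA_def by measurable
  have w1X: "w1 (X1 \<omega>) = WY Y Z (Suc m) \<omega>" for \<omega> using w1 by (simp add: w1_def)
  define D1 where "D1 = distr M PA X1"
  define D2 where "D2 = distr M PB X2"
  interpret D1: prob_space D1 unfolding D1_def by (rule prob_space_distr) simp
  interpret D2: prob_space D2 unfolding D2_def by (rule prob_space_distr) simp
  have sD1[measurable_cong, simp]: "sets D1 = sets PA" by (simp add: D1_def)
  have sD2[measurable_cong, simp]: "sets D2 = sets PB" by (simp add: D2_def)
  have joint: "D1 \<Otimes>\<^sub>M D2 = distr M (PA \<Otimes>\<^sub>M PB) (\<lambda>\<omega>. (X1 \<omega>, X2 \<omega>))"
    using ind unfolding indep_var_distribution_eq D1_def D2_def by simp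
  have Qv[measurable]: "Q v \<in> borel_measurable PB" for v using measurable_Pair2[OF Qm, of v] by simp
  define Rf where "Rf v = (\<integral>\<^sup>+g. Q v g \<partial>D2)" for v
  have Qm2: "case_prod Q \<in> borel_measurable (borel \<Otimes>\<^sub>M D2)"
  proof -
    have "sets (borel \<Otimes>\<^sub>M D2) = sets (borel \<Otimes>\<^sub>M PB)" by (intro sets_pair_measure_cong) auto
    then have e: "measurable (borel \<Otimes>\<^sub>M D2) borel = measurable (borel \<Otimes>\<^sub>M PB) (borel :: ennreal measure)"
      by (rule measurable_cong_sets) simp
    have "case_prod Q = (\<lambda>p. Q (fst p) (snd p))" by auto
    then show ?thesis using Qm unfolding e by simp
  qed
  have Rfm[measurable]: "Rf \<in> borel_measurable borel"
    unfolding Rf_def by (rule D2.borel_measurable_nn_integral[OF Qm2])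
  have Rf_eq: "Rf v = indicator {v. a 1 \<le> \<bar>w + v\<bar>} v * emeasure M (Ev (Suc m) n (\<lambda>k. a (Suc k)) (w + v) x)" for v
  proof -
    have "Rf v = (\<integral>\<^sup>+\<omega>. Q v (X2 \<omega>) \<partial>M)"
      unfolding Rf_def D2_def by (subst nn_integral_distr) auto
    also have "\<dots> = (\<integral>\<^sup>+\<omega>. indicator {v. a 1 \<le> \<bar>w + v\<bar>} v * indicator (Ev (Suc m) n (\<lambda>k. a (Suc k)) (w + v) x) \<omega> \<partial>M)"
      by (intro nn_integral_cong eq2)
    also have "\<dots> = indicator {v. a 1 \<le> \<bar>w + v\<bar>} v * emeasure M (Ev (Suc m) n (\<lambda>k. a (Suc k)) (w + v) x)"
      by (subst nn_integral_cmult) auto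
    finally show ?thesis .
  qed
  have QA[measurable]: "(\<lambda>p. Q (w1 (fst p)) (snd p)) \<in> borel_measurable (PA \<Otimes>\<^sub>M PB)"
  proof -
    have "(\<lambda>p. (w1 (fst p), snd p)) \<in> measurable (PA \<Otimes>\<^sub>M PB) (borel \<Otimes>\<^sub>M PB)" by measurable
    from measurable_compose[OF this Qm] show ?thesis by (simp add: comp_def)
  qed
  have "emeasure M (Ev m (Suc n) a w x) = (\<integral>\<^sup>+\<omega>. indicator (Ev m (Suc n) a w x) \<omega> \<partial>M)"
    by (simp add: nn_integral_indicator)
  also have "\<dots> = (\<integral>\<^sup>+\<omega>. Q (w1 (X1 \<omega>)) (X2 \<omega>) \<partial>M)"
    by (intro nn_integral_cong) (simp add: eq1 w1X)
  also have "\<dots> = (\<integral>\<^sup>+p. Q (w1 (fst p)) (snd p) \<partial>distr M (PA \<Otimes>\<^sub>M PB) (\<lambda>\<omega>. (X1 \<omega>, X2 \<omega>)))"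
    by (subst nn_integral_distr) auto
  also have "\<dots> = (\<integral>\<^sup>+p. Q (w1 (fst p)) (snd p) \<partial>(D1 \<Otimes>\<^sub>M D2))" by (simp only: joint)
  also have "\<dots> = (\<integral>\<^sup>+g1. (\<integral>\<^sup>+g2. Q (w1 g1) g2 \<partial>D2) \<partial>D1)"
    by (subst D2.nn_integral_fst[symmetric]) auto
  also have "\<dots> = (\<integral>\<^sup>+g1. Rf (w1 g1) \<partial>D1)" by (simp add: Rf_def)
  also have "\<dots> = (\<integral>\<^sup>+\<omega>. Rf (w1 (X1 \<omega>)) \<partial>M)" unfolding D1_def by (subst nn_integral_distr) auto
  also have "\<dots> = (\<integral>\<^sup>+\<omega>. Rf (WY Y Z (Suc m) \<omega>) \<partial>M)" by (simp add: w1X)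
  also have "\<dots> = (\<integral>\<^sup>+v. Rf v \<partial>distr M borel (WY Y Z (Suc m)))" by (subst nn_integral_distr) auto
  also have "\<dots> = (\<integral>\<^sup>+v. Rf v \<partial>law)" by (simp only: W_law)
  finally show ?thesis by (simp add: Rf_eq)
qed

end



context wsetup
begin

lemma law_meas_iff: fixes f :: "real \<Rightarrow> real" shows "(f \<in> borel_measurable law) \<longleftrightarrow> (f \<in> borel_measurable borel)"
  using measurable_cong_sets[OF sets_law refl, where N="borel :: real measure"] by simp

primrec GE :: "nat \<Rightarrow> (nat \<Rightarrow> real) \<Rightarrow> real \<Rightarrow> real \<Rightarrow> ennreal" where
  "GE 0 a w x = emeasure law {..x - w}"
| "GE (Suc n) a w x = (\<integral>\<^sup>+v. indicator {v. a 1 \<le> \<bar>w + v\<bar>} v * GE n (\<lambda>k. a (Suc k)) (w + v) x \<partial>law)"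

lemma Ev_GE: "emeasure M (Ev m n a w x) = GE n a w x"
proof (induction n arbitrary: m a w)
  case 0
  have "Ev m 0 a w x = WY Y Z (Suc m) -` {..x - w} \<inter> space M"
    by (auto simp: Ev_def)
  then have "emeasure M (Ev m 0 a w x) = emeasure (distr M borel (WY Y Z (Suc m))) {..x - w}"
    by (simp add: emeasure_distr)
  then show ?case by (simp add: W_law)
next
  case (Suc n)
  show ?case unfolding R_step GE.simps Suc.IH ..
qed

lemma GE_le1: "GE n a w x \<le> 1"
  using Ev_GE[of 0 n a w x] emeasure_le_1[of "Ev 0 n a w x"] by simp

lemma GE_meas[measurable]: "(\<lambda>w. GE n a w x) \<in> borel_measurable borel"
  using Ev_meas_w[of 0 n a x] by (simp add: Ev_GE)

definition "Gf n a w x = enn2real (GE n a w x)"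

lemma GE_Gf: "GE n a w x = ennreal (Gf n a w x)"
  unfolding Gf_def using GE_le1[of n a w x] by (simp add: ennreal_enn2real_if top_unique) (metis ennreal_one_neq_top top.extremum_uniqueI)

lemma Gf_meas[measurable]: "(\<lambda>w. Gf n a w x) \<in> borel_measurable borel"
  unfolding Gf_def by measurable

lemma Gf_meas'[measurable (raw)]: "g \<in> borel_measurable N \<Longrightarrow> (\<lambda>v. Gf n a (g v) x) \<in> borel_measurable N"
  using measurable_compose[OF _ Gf_meas] by blast

lemma Gf_nonneg: "0 \<le> Gf n a w x" by (simp add: Gf_def)
lemma Gf_le1: "Gf n a w x \<le> 1"
  using GE_le1[of n a w x] unfolding GE_Gf by simp

lemma Fcdf_Gf: "Fcdf M (WY Y Z) n a w x = Gf n a w x"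
proof -
  have "Fcdf M (WY Y Z) n a w x = measure M (Ev 0 n a w x)"
    unfolding Fcdf_def Ev_def Sigma_sum_def by (simp add: atLeastAtMostSuc_conv)
  then show ?thesis unfolding Gf_def by (simp add: measure_def Ev_GE)
qed

lemma Gf_0: "Gf 0 a w x = measure law {..x - w}"
  unfolding Gf_def by (simp add: measure_def)

lemma Gf_Suc: "Gf (Suc n) a w x = (\<integral>v. indicator {v. a 1 \<le> \<bar>w + v\<bar>} v * Gf n (\<lambda>k. a (Suc k)) (w + v) x \<partial>law)"
proof -
  have "Gf (Suc n) a w x = enn2real (\<integral>\<^sup>+v. ennreal (indicator {v. a 1 \<le> \<bar>w + v\<bar>} v * Gf n (\<lambda>k. a (Suc k)) (w + v) x) \<partial>law)"
    unfolding Gf_def GE.simps by (simp add: GE_Gf ennreal_mult' Gf_nonneg ennreal_indicator)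
  also have "\<dots> = (\<integral>v. indicator {v. a 1 \<le> \<bar>w + v\<bar>} v * Gf n (\<lambda>k. a (Suc k)) (w + v) x \<partial>law)"
  proof (intro enn2real_nn_integral_eq_integral)
    have m1: "{v. a 1 \<le> \<bar>w + v\<bar>} \<in> sets borel" by measurable
    have m2: "(\<lambda>v. Gf n (\<lambda>k. a (Suc k)) (w + v) x) \<in> borel_measurable borel" by measurable
    show "(\<lambda>v. indicator {v. a 1 \<le> \<bar>w + v\<bar>} v * Gf n (\<lambda>k. a (Suc k)) (w + v) x) \<in> borel_measurable law"
      unfolding law_meas_iff using m1 m2 by (intro borel_measurable_times borel_measurable_indicator)
  qed (auto simp: Gf_nonneg)
  finally show ?thesis .
qed

end



context wsetup
begin

primrec Hf :: "nat \<Rightarrow> (nat \<Rightarrow> real) \<Rightarrow> real \<Rightarrow> real \<Rightarrow> real" where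
  "Hf 0 a w x = fd (x - w)"
| "Hf (Suc n) a w x = (\<integral>v. indicator {v. a 1 \<le> \<bar>w + v\<bar>} v * Hf n (\<lambda>k. a (Suc k)) (w + v) x \<partial>law)"

lemma Hf_meas[measurable]: "(\<lambda>w. Hf n a w x) \<in> borel_measurable borel"
proof (induction n arbitrary: a)
  case 0
  show ?case by simp
next
  case (Suc n)
  interpret L: prob_space law by (rule prob_law)
  have m1: "(\<lambda>p. Hf n (\<lambda>k. a (Suc k)) (fst p + snd p) x) \<in> borel_measurable (borel \<Otimes>\<^sub>M law)"
    by (rule measurable_compose[OF _ Suc.IH]) measurable
  have m2: "Measurable.pred (borel \<Otimes>\<^sub>M law) (\<lambda>p. a 1 \<le> \<bar>fst p + snd p\<bar>)" by measurable
  have "(\<lambda>p. indicator {v. a 1 \<le> \<bar>fst p + v\<bar>} (snd p) * Hf n (\<lambda>k. a (Suc k)) (fst p + snd p) x :: real)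
      \<in> borel_measurable (borel \<Otimes>\<^sub>M law)"
    using m1 m2 by (simp add: indicator_def) measurable
  then show ?case unfolding Hf.simps
    by (intro L.borel_measurable_lebesgue_integral) (simp add: case_prod_beta')
qed

lemma Hf_meas_raw[measurable (raw)]:
  "g \<in> borel_measurable N \<Longrightarrow> (\<lambda>v. Hf n a (g v) x) \<in> borel_measurable N"
  using measurable_compose[OF _ Hf_meas] by blast

lemma Hf_bounds: "0 \<le> Hf n a w x \<and> Hf n a w x \<le> 1 / s0"
proof (induction n arbitrary: a w)
  case 0 then show ?case using fd_bound[of "x - w"] fd_nonneg[of "x - w"] by simp
next
  case (Suc n)
  interpret L: prob_space law by (rule prob_law)
  have "\<bar>indicator {v. a 1 \<le> \<bar>w + v\<bar>} v * Hf n (\<lambda>k. a (Suc k)) (w + v) x\<bar> \<le> 1 / s0" for v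
    using Suc.IH[of "\<lambda>k. a (Suc k)" "w + v"] s0_pos by (auto simp: indicator_def)
  then have "\<bar>Hf (Suc n) a w x\<bar> \<le> 1 / s0"
    unfolding Hf.simps by (intro L.abs_integral_le_const) (auto simp: law_meas_iff)
  moreover have "0 \<le> Hf (Suc n) a w x"
    unfolding Hf.simps using Suc.IH by (intro integral_nonneg_AE) (auto simp: indicator_def)
  ultimately show ?case by simp
qed

lemma Hf_nonneg: "0 \<le> Hf n a w x" using Hf_bounds by blast
lemma Hf_le: "Hf n a w x \<le> 1 / s0" using Hf_bounds by blast

lemma Hf_deriv: "((\<lambda>x. Gf n a w x) has_real_derivative Hf n a w x) (at x)"
proof (induction n arbitrary: a w x)
  case 0
  have "((\<lambda>x. x - w) has_real_derivative 1) (at x)" by (auto intro!: derivative_eq_intros)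
  from DERIV_chain2[OF cdf_deriv this] show ?case by (simp add: Gf_0)
next
  case (Suc n)
  interpret L: prob_space law by (rule prob_law)
  show ?case unfolding Gf_Suc[abs_def] Hf.simps
  proof (rule deriv_integral[where r=1 and e="\<lambda>_. 1 / s0"])
    show "integrable law (\<lambda>v. indicator {v. a 1 \<le> \<bar>w + v\<bar>} v * Gf n (\<lambda>k. a (Suc k)) (w + v) t)" for t
      using Gf_nonneg Gf_le1
      by (intro L.integrable_const_bound[where B=1]) (auto simp: law_meas_iff indicator_def)
    show "((\<lambda>t. indicator {v. a 1 \<le> \<bar>w + v\<bar>} v * Gf n (\<lambda>k. a (Suc k)) (w + v) t) has_real_derivative
           indicator {v. a 1 \<le> \<bar>w + v\<bar>} v * Hf n (\<lambda>k. a (Suc k)) (w + v) t) (at t)" for v t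
      by (intro DERIV_cmult Suc.IH)
    show "\<bar>indicator {v. a 1 \<le> \<bar>w + v\<bar>} v * Hf n (\<lambda>k. a (Suc k)) (w + v) t\<bar> \<le> 1 / s0" for v t
      using Hf_nonneg Hf_le s0_pos by (auto simp: indicator_def)
    show "(\<lambda>v. indicator {v. a 1 \<le> \<bar>w + v\<bar>} v * Hf n (\<lambda>k. a (Suc k)) (w + v) x) \<in> borel_measurable law"
      unfolding law_meas_iff by measurable
  qed auto
qed

end



context wsetup
begin

lemma law_repr:
  assumes hm[measurable]: "h \<in> borel_measurable borel" and h0: "\<And>u. 0 \<le> h u" and hb: "\<And>u. h u \<le> B"
  shows "(\<integral>v. h v \<partial>law) = (\<integral>y. (\<integral>u. nd (sg y) u * h u \<partial>lborel) \<partial>\<nu>)"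
proof -
  interpret nu: prob_space \<nu> by (rule prob_nu)
  have hb': "\<bar>h u\<bar> \<le> B" for u using h0[of u] hb[of u] by simp
  have I_int: "integrable lborel (\<lambda>u. nd (sg y) u * h u)" for y
    using gconv_int[OF sg_pos hm hb', of y 0] by simp
  have I_bd: "\<bar>\<integral>u. nd (sg y) u * h u \<partial>lborel\<bar> \<le> B" for y
    using gconv_bd0[OF sg_pos hm hb', of y 0] by simp
  have I_nonneg: "0 \<le> (\<integral>u. nd (sg y) u * h u \<partial>lborel)" for y
    using h0 by (intro integral_nonneg_AE) auto
  have I_meas: "(\<lambda>y. \<integral>u. nd (sg y) u * h u \<partial>lborel) \<in> borel_measurable borel"
    by measurable
  have "(\<integral>\<^sup>+v. ennreal (h v) \<partial>law) = (\<integral>\<^sup>+\<omega>. ennreal (h (WY Y Z 0 \<omega>)) \<partial>M)"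
    unfolding law_def by (subst nn_integral_distr) auto
  also have "\<dots> = (\<integral>\<^sup>+y. (\<integral>\<^sup>+u. ennreal (nd (sg y) u) * ennreal (h u) \<partial>lborel) \<partial>\<nu>)"
    by (rule mixture) measurable
  also have "\<dots> = (\<integral>\<^sup>+y. ennreal (\<integral>u. nd (sg y) u * h u \<partial>lborel) \<partial>\<nu>)"
    by (intro nn_integral_cong) (auto simp: ennreal_mult'[symmetric] h0 intro!: nn_integral_eq_integral I_int)
  also have "\<dots> = ennreal (\<integral>y. (\<integral>u. nd (sg y) u * h u \<partial>lborel) \<partial>\<nu>)"
    using I_bd I_nonneg I_meas
    by (intro nn_integral_eq_integral nu.integrable_const_bound[where B=B]) auto
  finally have e: "(\<integral>\<^sup>+v. ennreal (h v) \<partial>law) = ennreal (\<integral>y. (\<integral>u. nd (sg y) u * h u \<partial>lborel) \<partial>\<nu>)" .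
  have "(\<integral>v. h v \<partial>law) = enn2real (\<integral>\<^sup>+v. ennreal (h v) \<partial>law)"
    using h0 by (intro integral_eq_nn_integral) (auto simp: law_meas_iff)
  also have "\<dots> = (\<integral>y. (\<integral>u. nd (sg y) u * h u \<partial>lborel) \<partial>\<nu>)"
    unfolding e using I_nonneg by (intro enn2real_ennreal integral_nonneg_AE) auto
  finally show ?thesis .
qed

lemma law_reflect:
  fixes h :: "real \<Rightarrow> real"
  assumes hm[measurable]: "h \<in> borel_measurable borel"
  shows "(\<integral>v. h (- v) \<partial>law) = (\<integral>v. h v \<partial>law)"
proof -
  have "(\<integral>v. h (- v) \<partial>law) = (\<integral>v. fd v * h (- v) \<partial>lborel)"
    unfolding law_eq by (subst integral_density) (auto simp: fd_nonneg)
  also have "\<dots> = (\<integral>v. fd (- v) * h (- (- v)) \<partial>lborel)"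
    using lborel_integral_real_affine[of "-1" "\<lambda>v. fd v * h (- v)" 0] by simp
  also have "\<dots> = (\<integral>v. fd v * h v \<partial>lborel)" by (simp add: fd_even)
  also have "\<dots> = (\<integral>v. h v \<partial>law)"
    unfolding law_eq by (subst integral_density) (auto simp: fd_nonneg)
  finally show ?thesis .
qed

lemma Hf_sym: "Hf n a (- w) (- x) = Hf n a w x"
proof (induction n arbitrary: a w)
  case 0 show ?case using fd_even[of "x - w"] by simp
next
  case (Suc n)
  have "Hf (Suc n) a (- w) (- x) = (\<integral>v. indicator {v. a 1 \<le> \<bar>- w + v\<bar>} v * Hf n (\<lambda>k. a (Suc k)) (- w + v) (- x) \<partial>law)"
    by simp
  also have "\<dots> = (\<integral>v. indicator {v. a 1 \<le> \<bar>- w + v\<bar>} (- v) * Hf n (\<lambda>k. a (Suc k)) (- w + - v) (- x) \<partial>law)"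
  proof -
    define H where "H v = indicator {v. a 1 \<le> \<bar>- w + v\<bar>} v * Hf n (\<lambda>k. a (Suc k)) (- w + v) (- x)" for v
    have Hm: "H \<in> borel_measurable borel" unfolding H_def[abs_def] by measurable
    from law_reflect[OF Hm] show ?thesis unfolding H_def by simp
  qed
  also have "\<dots> = (\<integral>v. indicator {v. a 1 \<le> \<bar>w + v\<bar>} v * Hf n (\<lambda>k. a (Suc k)) (w + v) x \<partial>law)"
  proof (rule Bochner_Integration.integral_cong[OF refl])
    fix v
    have "Hf n (\<lambda>k. a (Suc k)) (- w + - v) (- x) = Hf n (\<lambda>k. a (Suc k)) (w + v) x"
      using Suc.IH[of "\<lambda>k. a (Suc k)" "w + v"] by simp
    moreover have "\<bar>- v - w\<bar> = \<bar>w + v\<bar>" by simp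
    ultimately show "indicator {v. a 1 \<le> \<bar>- w + v\<bar>} (- v) * Hf n (\<lambda>k. a (Suc k)) (- w + - v) (- x) =
        indicator {v. a 1 \<le> \<bar>w + v\<bar>} v * Hf n (\<lambda>k. a (Suc k)) (w + v) x"
      by (simp add: indicator_def)
  qed
  finally show ?case by simp
qed

definition "mm n a x u = indicator {u. a 1 \<le> \<bar>u\<bar>} u * Hf n (\<lambda>k. a (Suc k)) u x"

lemma mm_meas[measurable]: "mm n a x \<in> borel_measurable borel"
  unfolding mm_def[abs_def] by measurable

lemma mm_bounds: "0 \<le> mm n a x u" "mm n a x u \<le> 1 / s0" "\<bar>mm n a x u\<bar> \<le> 1 / s0"
  using Hf_nonneg Hf_le s0_pos by (auto simp: mm_def indicator_def)

lemma Hf_Suc_repr: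
  "Hf (Suc n) a w x = (\<integral>y. (\<integral>u. nd (sg y) (u - w) * mm n a x u \<partial>lborel) \<partial>\<nu>)"
proof -
  have "Hf (Suc n) a w x = (\<integral>v. mm n a x (w + v) \<partial>law)"
    by (simp add: mm_def indicator_def)
  also have "\<dots> = (\<integral>y. (\<integral>u. nd (sg y) u * mm n a x (w + u) \<partial>lborel) \<partial>\<nu>)"
    by (rule law_repr[where B="1/s0"]) (auto intro: mm_bounds)
  also have "\<dots> = (\<integral>y. (\<integral>u. nd (sg y) (u - w) * mm n a x u \<partial>lborel) \<partial>\<nu>)"
  proof (rule Bochner_Integration.integral_cong[OF refl])
    fix y
    show "(\<integral>u. nd (sg y) u * mm n a x (w + u) \<partial>lborel) = (\<integral>u. nd (sg y) (u - w) * mm n a x u \<partial>lborel)"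
      using integral_shift[of "\<lambda>u. nd (sg y) (u - w) * mm n a x u" "- w"] by (simp add: add.commute)
  qed
  finally show ?thesis .
qed

end



context wsetup
begin

lemma refl_lborel: fixes g :: "real \<Rightarrow> real" shows "(\<integral>u. g (- u) \<partial>lborel) = (\<integral>u. g u \<partial>lborel)"
  using lborel_integral_real_affine[of "-1" g 0] by simp

lemma gauss_refl_nonneg:
  fixes D :: "real \<Rightarrow> real"
  assumes s: "\<sigma> > 0" and Dm[measurable]: "D \<in> borel_measurable borel" and Db: "\<And>u. \<bar>D u\<bar> \<le> B"
    and Dodd: "\<And>u. D (- u) = - D u" and Dpos: "\<And>u. 0 \<le> u \<Longrightarrow> 0 \<le> D u" and w: "0 \<le> w"
  shows "0 \<le> (\<integral>u. nd \<sigma> (u - w) * D u \<partial>lborel)"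
proof -
  let ?J = "\<integral>u. nd \<sigma> (u - w) * D u \<partial>lborel"
  have i1: "integrable lborel (\<lambda>u. nd \<sigma> (u - w) * D u)" by (rule gconv_int[OF s Dm Db])
  have i2: "integrable lborel (\<lambda>u. nd \<sigma> (u - (- w)) * D u)" by (rule gconv_int[OF s Dm Db])
  have "?J = (\<integral>u. nd \<sigma> (- u - w) * D (- u) \<partial>lborel)"
    using refl_lborel[of "\<lambda>u. nd \<sigma> (u - w) * D u"] by simp
  also have "\<dots> = (\<integral>u. - (nd \<sigma> (u - (- w)) * D u) \<partial>lborel)"
  proof (rule Bochner_Integration.integral_cong[OF refl])
    fix u
    have "nd \<sigma> (- u - w) = nd \<sigma> (u - (- w))" using nd_even[of \<sigma> "u + w"] by simp
    then show "nd \<sigma> (- u - w) * D (- u) = - (nd \<sigma> (u - (- w)) * D u)" by (simp add: Dodd)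
  qed
  also have "\<dots> = - (\<integral>u. nd \<sigma> (u - (- w)) * D u \<partial>lborel)" by simp
  finally have J2: "?J = - (\<integral>u. nd \<sigma> (u - (- w)) * D u \<partial>lborel)" .
  have pw: "0 \<le> (nd \<sigma> (u - w) - nd \<sigma> (u - (- w))) * D u" for u
  proof (cases "0 \<le> u")
    case True
    have "nd \<sigma> (u - (- w)) \<le> nd \<sigma> (u - w)" using True w by (intro nd_mono) auto
    then show ?thesis using Dpos[OF True] by simp
  next
    case False
    have "nd \<sigma> (u - w) \<le> nd \<sigma> (u - (- w))" using False w by (intro nd_mono) auto
    moreover have "D u \<le> 0" using Dpos[of "- u"] Dodd[of u] False by simp
    ultimately show ?thesis by (intro mult_nonpos_nonpos) auto
  qed
  have "0 \<le> (\<integral>u. (nd \<sigma> (u - w) - nd \<sigma> (u - (- w))) * D u \<partial>lborel)"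
    using pw by (intro integral_nonneg_AE) auto
  also have "\<dots> = ?J - (\<integral>u. nd \<sigma> (u - (- w)) * D u \<partial>lborel)"
    using i1 i2 by (simp add: left_diff_distrib)
  also have "\<dots> = 2 * ?J" using J2 by simp
  finally show ?thesis by simp
qed

lemma mm_refl: "mm n a x (- u) = mm n a (- x) u"
  using Hf_sym[of n "\<lambda>k. a (Suc k)" u "- x"] by (simp add: mm_def indicator_def)

lemma Hf_mono: "0 \<le> w \<Longrightarrow> 0 \<le> x \<Longrightarrow> Hf n a w (- x) \<le> Hf n a w x"
proof (induction n arbitrary: a w)
  case 0
  then show ?case using fd_mono[of "x - w" "- x - w"] by simp
next
  case (Suc n)
  interpret nu: prob_space \<nu> by (rule prob_nu)
  define D where "D u = mm n a x u - mm n a (- x) u" for u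
  have Dm[measurable]: "D \<in> borel_measurable borel" unfolding D_def[abs_def] by measurable
  have Db: "\<bar>D u\<bar> \<le> 1 / s0" for u using mm_bounds[of n a x u] mm_bounds[of n a "- x" u] by (simp add: D_def)
  have Dodd: "D (- u) = - D u" for u using mm_refl[of n a x u] mm_refl[of n a "- x" u] by (simp add: D_def)
  have Dpos: "0 \<le> D u" if "0 \<le> u" for u
    using Suc.IH[of u "\<lambda>k. a (Suc k)"] that Suc.prems by (simp add: D_def mm_def indicator_def)
  define K where "K x' y = (\<integral>u. nd (sg y) (u - w) * mm n a x' u \<partial>lborel)" for x' y
  have Ki: "integrable \<nu> (K x')" for x'
  proof (rule nu.integrable_const_bound[where B="1/s0"])
    show "AE y in \<nu>. norm (K x' y) \<le> 1 / s0"
      using gconv_bd0[OF sg_pos mm_meas mm_bounds(3)] by (simp add: K_def)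
    show "K x' \<in> borel_measurable \<nu>" unfolding K_def[abs_def] by measurable
  qed
  have "Hf (Suc n) a w x - Hf (Suc n) a w (- x) = (\<integral>y. K x y - K (- x) y \<partial>\<nu>)"
    unfolding Hf_Suc_repr K_def[symmetric] using Ki by simp
  also have "\<dots> = (\<integral>y. (\<integral>u. nd (sg y) (u - w) * D u \<partial>lborel) \<partial>\<nu>)"
  proof (rule Bochner_Integration.integral_cong[OF refl])
    fix y
    show "K x y - K (- x) y = (\<integral>u. nd (sg y) (u - w) * D u \<partial>lborel)"
      unfolding K_def D_def
      using gconv_int[OF sg_pos mm_meas mm_bounds(3), of y w n a x] gconv_int[OF sg_pos mm_meas mm_bounds(3), of y w n a "- x"]
      by (simp add: right_diff_distrib)
  qed
  also have "\<dots> \<ge> 0"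
    using Suc.prems by (intro integral_nonneg_AE AE_I2 gauss_refl_nonneg[OF sg_pos Dm Db Dodd Dpos]) auto
  finally show ?case by simp
qed

end



context wsetup
begin

lemma neg_int: "(\<integral>u. - nd1 \<sigma> (u - w) * m u \<partial>lborel) = - (\<integral>u. nd1 \<sigma> (u - w) * m u \<partial>lborel)"
  by simp

lemma Hf_wderiv:
  "\<exists>g. (\<forall>w. ((\<lambda>v. Hf n a v x) has_real_derivative g w) (at w)) \<and> continuous_on UNIV g \<and> bounded (range g)"
proof (cases n)
  case 0
  have c1: "isCont fd1 t" for t using fd1_deriv DERIV_isCont by blast
  show ?thesis
  proof (intro exI[of _ "\<lambda>w. - fd1 (x - w)"] conjI allI)
    fix w
    have "((\<lambda>w. x - w) has_real_derivative -1) (at w)" by (auto intro!: derivative_eq_intros)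
    from DERIV_chain2[OF fd_deriv this]
    show "((\<lambda>v. Hf n a v x) has_real_derivative - fd1 (x - w)) (at w)" using 0 by simp
  next
    show "continuous_on UNIV (\<lambda>w. - fd1 (x - w))"
      by (intro continuous_at_imp_continuous_on ballI continuous_intros isCont_o2[OF _ c1])
    show "bounded (range (\<lambda>w. - fd1 (x - w)))"
      by (rule bounded_range_abs[where C="1/s0\<^sup>2"]) (simp add: fd1_bound)
  qed
next
  case (Suc n')
  interpret nu: prob_space \<nu> by (rule prob_nu)
  define K where "K y w = (\<integral>u. nd (sg y) (u - w) * mm n' a x u \<partial>lborel)" for y w
  define K' where "K' y w = (\<integral>u. - nd1 (sg y) (u - w) * mm n' a x u \<partial>lborel)" for y w
  define C where "C = 1 / s0 / s0"
  have K_meas: "(\<lambda>y. K y t) \<in> borel_measurable \<nu>" for t unfolding K_def by measurable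
  have K'_meas: "(\<lambda>y. K' y t) \<in> borel_measurable \<nu>" for t unfolding K'_def by measurable
  have K'_bd: "\<bar>K' y t\<bar> \<le> C" for y t
  proof -
    have "\<bar>K' y t\<bar> \<le> 1 / s0 / sg y"
      unfolding K'_def neg_int using gconv_bd1[OF sg_pos mm_meas mm_bounds(3)] by simp
    also have "\<dots> \<le> C" unfolding C_def using s0_pos sg_ge[of y]
      by (intro divide_left_mono) auto
    finally show ?thesis .
  qed
  have K_int: "integrable \<nu> (\<lambda>y. K y t)" for t
    using gconv_bd0[OF sg_pos mm_meas mm_bounds(3)] K_meas
    by (intro nu.integrable_const_bound[where B="1/s0"]) (auto simp: K_def)
  have Hrep: "(\<lambda>v. Hf n a v x) = (\<lambda>v. \<integral>y. K y v \<partial>\<nu>)"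
    by (rule ext) (simp only: Suc Hf_Suc_repr K_def)
  show ?thesis
  proof (intro exI[of _ "\<lambda>w. \<integral>y. K' y w \<partial>\<nu>"] conjI allI)
    fix w
    show "((\<lambda>v. Hf n a v x) has_real_derivative (\<integral>y. K' y w \<partial>\<nu>)) (at w)"
      unfolding Hrep
    proof (rule deriv_integral[where r=1 and e="\<lambda>_. C"])
      show "((\<lambda>t. K y t) has_real_derivative K' y t) (at t)" for y t
        unfolding K_def K'_def by (rule gconv_deriv[OF sg_pos mm_meas mm_bounds(3)])
    qed (use K_int K'_bd K'_meas in auto)
  next
    show "continuous_on UNIV (\<lambda>w. \<integral>y. K' y w \<partial>\<nu>)"
    proof (intro continuous_at_imp_continuous_on ballI)
      fix w :: real
      show "isCont (\<lambda>w. \<integral>y. K' y w \<partial>\<nu>) w"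
      proof (rule cont_integral[where r=1 and e="\<lambda>_. C"])
        show "isCont (K' y) w" for y
          unfolding K'_def[abs_def] neg_int
          by (intro continuous_intros gconv_cont[OF sg_pos mm_meas mm_bounds(3)])
      qed (use K'_bd K'_meas in auto)
    qed
  next
    show "bounded (range (\<lambda>w. \<integral>y. K' y w \<partial>\<nu>))"
      by (rule bounded_range_abs[where C=C]) (intro nu.abs_integral_le_const K'_meas K'_bd)
  qed
qed

end


context wsetup
begin

lemma part_c:
  "\<exists>fn :: real \<Rightarrow> real \<Rightarrow> real.
        (\<forall>w x. (Fcdf M (WY Y Z) n a w has_real_derivative fn w x) (at x))
        \<and> (\<forall>w x. w \<ge> 0 \<longrightarrow> x \<ge> 0 \<longrightarrow> fn w x \<ge> fn w (- x))
        \<and> (\<forall>x. \<exists>g. (\<forall>w. ((\<lambda>v. fn v x) has_real_derivative g w) (at w))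
                   \<and> continuous_on UNIV g \<and> bounded (range g))"
proof (intro exI[of _ "\<lambda>w x. Hf n a w x"] conjI allI impI)
  fix w x
  have "Fcdf M (WY Y Z) n a w = (\<lambda>x. Gf n a w x)" by (rule ext) (rule Fcdf_Gf)
  then show "(Fcdf M (WY Y Z) n a w has_real_derivative Hf n a w x) (at x)" using Hf_deriv by simp
next
  fix w x :: real assume "0 \<le> w" "0 \<le> x"
  then show "Hf n a w (- x) \<le> Hf n a w x" by (rule Hf_mono)
next
  fix x show "\<exists>g. (\<forall>w. ((\<lambda>v. Hf n a v x) has_real_derivative g w) (at w)) \<and> continuous_on UNIV g \<and> bounded (range g)"
    by (rule Hf_wderiv)
qed

end

theorem mainTheorem15:
  fixes M :: "'a measure" and Y Z :: "nat \<Rightarrow> 'a \<Rightarrow> real" and \<epsilon> :: real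
    and n :: nat and a :: "nat \<Rightarrow> real"
  assumes "prob_space M"
    and indep: "prob_space.indep_vars M (\<lambda>_. borel)
                  (\<lambda>i. case i of Inl k \<Rightarrow> Y k | Inr k \<Rightarrow> Z k) UNIV"
    and iid: "\<And>k. distr M borel (Y k) = distr M borel (Y 0)"
    and normal: "\<And>k. distributed M lborel (Z k) (\<lambda>x. ennreal (std_normal_density x))"
    and eps: "\<epsilon> > 0" and Y_ge: "AE \<omega> in M. Y 0 \<omega> \<ge> \<epsilon>"
    and Y_int: "integrable M (Y 0)"
    and a_nonneg: "\<And>k. k \<in> {1..n} \<Longrightarrow> a k \<ge> 0"
  shows
    "(\<exists>f f' f''. distributed M lborel (WY Y Z 0) (\<lambda>x. ennreal (f x))
        \<and> (\<forall>x. (f has_real_derivative f' x) (at x))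
        \<and> (\<forall>x. (f' has_real_derivative f'' x) (at x))
        \<and> continuous_on UNIV f'
        \<and> bounded (range f) \<and> bounded (range f') \<and> bounded (range f'')
        \<and> uniformly_continuous_on UNIV f \<and> uniformly_continuous_on UNIV f')
     \<and>
     (\<exists>fn :: real \<Rightarrow> real \<Rightarrow> real.
        (\<forall>w x. (Fcdf M (WY Y Z) n a w has_real_derivative fn w x) (at x))
        \<and> (\<forall>w x. w \<ge> 0 \<longrightarrow> x \<ge> 0 \<longrightarrow> fn w x \<ge> fn w (- x))
        \<and> (\<forall>x. \<exists>g. (\<forall>w. ((\<lambda>v. fn v x) has_real_derivative g w) (at w))
                   \<and> continuous_on UNIV g \<and> bounded (range g)))"
proof -
  have "wsetup M Y Z \<epsilon>"
    unfolding wsetup_def wsetup_axioms_def using assms by auto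
  then interpret wsetup M Y Z \<epsilon> .
  show ?thesis using part_a part_c by blast
qed

end
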